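(* Let $q=2^m$ with $m\ge3$ and $U_0=\{\alpha\in\mathbb{F}_q:\mathrm{Tr}(\alpha^5)=0\}$. Then for all integers $s,r$ with $1\le s\le|U_0|$ and $1\le r\le s-2$, there exists a $1$-dim hull code over $\mathbb{F}_q$ with parameters $[2s+1,2(r+1),\ge2(s-r-1)]$ whose dual has parameters $[2s+1,2(s-r)-1,\ge2r+1]$.
   Context: $\mathrm{Tr}$ denotes the absolute trace from $\mathbb{F}_{2^m}$ to $\mathbb{F}_2$. $[n,k,\ge d]$ denotes a linear code of length $n$, dimension $k$ and minimum distance at least $d$. The hull of a linear code $C$ is $C\cap C^\perp$ (Euclidean dual), and $C$ is a $1$-dim hull code if $\dim(C\cap C^\perp)=1$. *)

theory Defs
  imports Complex_Main "HOL-Library.Function_Algebras"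
begin

text \<open>Absolute trace from GF(2^m) to GF(2), as a map into the field itself
  (its values lie in the prime field {0,1}).\<close>
definition abs_trace :: "nat \<Rightarrow> 'a::field \<Rightarrow> 'a" where
  "abs_trace m x = (\<Sum>i<m. x ^ (2 ^ i))"

text \<open>Vectors of length n over a field F are modelled as functions nat \<Rightarrow> F
  vanishing outside {0..<n}.  Componentwise scalar multiplication:\<close>
definition vscale :: "'a::field \<Rightarrow> (nat \<Rightarrow> 'a) \<Rightarrow> (nat \<Rightarrow> 'a)" where
  "vscale c v = (\<lambda>i. c * v i)"

global_interpretation fvec: vector_space "vscale :: 'a::field \<Rightarrow> (nat \<Rightarrow> 'a) \<Rightarrow> _"
  by unfold_locales (auto simp: vscale_def fun_eq_iff algebra_simps)

definition ambient :: "nat \<Rightarrow> (nat \<Rightarrow> 'a::zero) set" where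
  "ambient n = {v. \<forall>i\<ge>n. v i = 0}"

definition linear_code :: "nat \<Rightarrow> (nat \<Rightarrow> 'a::field) set \<Rightarrow> bool" where
  "linear_code n C \<longleftrightarrow> C \<subseteq> ambient n \<and> fvec.subspace C"

definition inner_prod :: "nat \<Rightarrow> (nat \<Rightarrow> 'a::field) \<Rightarrow> (nat \<Rightarrow> 'a) \<Rightarrow> 'a" where
  "inner_prod n u v = (\<Sum>i<n. u i * v i)"

definition dual_code :: "nat \<Rightarrow> (nat \<Rightarrow> 'a::field) set \<Rightarrow> (nat \<Rightarrow> 'a) set" where
  "dual_code n C = {v \<in> ambient n. \<forall>c\<in>C. inner_prod n v c = 0}"

definition code_hull :: "nat \<Rightarrow> (nat \<Rightarrow> 'a::field) set \<Rightarrow> (nat \<Rightarrow> 'a) set" where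
  "code_hull n C = C \<inter> dual_code n C"

definition hweight :: "nat \<Rightarrow> (nat \<Rightarrow> 'a::zero) \<Rightarrow> nat" where
  "hweight n v = card {i. i < n \<and> v i \<noteq> 0}"

definition min_dist_ge :: "nat \<Rightarrow> (nat \<Rightarrow> 'a::field) set \<Rightarrow> nat \<Rightarrow> bool" where
  "min_dist_ge n C d \<longleftrightarrow> (\<forall>c\<in>C. c \<noteq> 0 \<longrightarrow> hweight n c \<ge> d)"

definition code_params :: "(nat \<Rightarrow> 'a::field) set \<Rightarrow> nat \<Rightarrow> nat \<Rightarrow> nat \<Rightarrow> bool" where
  "code_params C n k d \<longleftrightarrow> linear_code n C \<and> fvec.dim C = k \<and> min_dist_ge n C d"

end

theory Submission
  imports Defs "HOL-Computational_Algebra.Polynomial" "HOL-Computational_Algebra.Primes"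
begin


lemma sum_fun_apply: "(\<Sum>i\<in>A. (f i :: 'b \<Rightarrow> 'c::comm_monoid_add)) x = (\<Sum>i\<in>A. f i x)"
  by (induction A rule: infinite_finite_induct) auto

interpretation fvp: vector_space_pair "vscale :: 'a::field \<Rightarrow> (nat \<Rightarrow> 'a) \<Rightarrow> _" "vscale :: 'a::field \<Rightarrow> (nat \<Rightarrow> 'a) \<Rightarrow> _"
  by unfold_locales

definition uvec :: "nat \<Rightarrow> nat \<Rightarrow> 'a::field" where
  "uvec i = (\<lambda>j. if j = i then 1 else 0)"

lemma supp_in_span:
  assumes "finite K" "\<And>i. i \<notin> K \<Longrightarrow> (v::nat \<Rightarrow> 'a::field) i = 0"
  shows "v \<in> fvec.span (uvec ` K)"
proof -
  have "v = (\<Sum>i\<in>K. vscale (v i) (uvec i))"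
  proof
    fix j
    show "v j = (\<Sum>i\<in>K. vscale (v i) (uvec i)) j"
    proof (cases "j \<in> K")
      case True
      have "(\<Sum>i\<in>K. vscale (v i) (uvec i)) j = (\<Sum>i\<in>K. if i = j then v i else 0)"
        unfolding sum_fun_apply by (intro sum.cong) (auto simp: vscale_def uvec_def)
      also have "\<dots> = v j" using True assms(1) by (simp add: sum.delta')
      finally show ?thesis by simp
    next
      case False
      have "(\<Sum>i\<in>K. vscale (v i) (uvec i)) j = 0"
        unfolding sum_fun_apply using False by (intro sum.neutral) (auto simp: vscale_def uvec_def)
      thus ?thesis using False assms(2) by simp
    qed
  qed
  also have "\<dots> \<in> fvec.span (uvec ` K)"
    by (intro fvec.span_sum fvec.span_scale fvec.span_base) auto
  finally show ?thesis .
qed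

lemma ambient_span: "ambient n \<subseteq> fvec.span (uvec ` {..<n} :: (nat \<Rightarrow> 'a::field) set)"
  unfolding ambient_def by (rule subsetI, rule supp_in_span) (auto simp: not_less)

lemma fin_basis:
  assumes "V \<subseteq> ambient n"
  obtains B :: "(nat \<Rightarrow> 'a::field) set" where "B \<subseteq> V" "fvec.independent B" "V \<subseteq> fvec.span B"
    "card B = fvec.dim V" "finite B"
proof -
  obtain B where B: "B \<subseteq> V" "fvec.independent B" "V \<subseteq> fvec.span B" "card B = fvec.dim V"
    using fvec.basis_exists by blast
  have "B \<subseteq> fvec.span (uvec ` {..<n})" using B(1) assms ambient_span by blast
  hence "finite B" using fvec.independent_span_bound[OF _ B(2)] by blast
  thus ?thesis using B that by blast
qed

lemma indep_le_dim:
  assumes "fvec.independent I" "I \<subseteq> V" "V \<subseteq> ambient n"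
  shows "finite I" "card I \<le> fvec.dim (V :: (nat \<Rightarrow> 'a::field) set)"
proof -
  obtain B where B: "B \<subseteq> V" "fvec.independent B" "V \<subseteq> fvec.span B"
    "card B = fvec.dim V" "finite B" using fin_basis[OF assms(3)] by blast
  have "I \<subseteq> fvec.span B" using assms(2) B(3) by blast
  thus "finite I" "card I \<le> fvec.dim V" using fvec.independent_span_bound[OF B(5) assms(1)] B(4) by auto
qed

lemma dim_mono_amb:
  assumes "V \<subseteq> W" "W \<subseteq> ambient n"
  shows "fvec.dim V \<le> fvec.dim (W :: (nat \<Rightarrow> 'a::field) set)"
proof -
  obtain B where B: "B \<subseteq> V" "fvec.independent B" "V \<subseteq> fvec.span B"
    "card B = fvec.dim V" "finite B" using fin_basis[of V n] assms by blast
  show ?thesis using indep_le_dim[OF B(2) _ assms(2)] B assms(1) by auto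
qed

lemma dim_pos:
  assumes "x \<in> V" "x \<noteq> 0" "V \<subseteq> ambient n"
  shows "fvec.dim (V :: (nat \<Rightarrow> 'a::field) set) \<ge> 1"
proof -
  have "fvec.independent {x}" using assms(2) by simp
  thus ?thesis using indep_le_dim[of "{x}" V n] assms by auto
qed

lemma dim_hyperplane:
  assumes "fvec.subspace V" "V \<subseteq> ambient n"
  shows "fvec.dim V \<le> fvec.dim {v \<in> V. v P = (0::'a::field)} + 1"
proof (cases "\<exists>v\<in>V. v P \<noteq> 0")
  case False
  hence "{v \<in> V. v P = 0} = V" by auto
  thus ?thesis by simp
next
  case True
  then obtain u where u: "u \<in> V" "u P \<noteq> 0" by blast
  let ?W = "{v \<in> V. v P = 0}"
  obtain B where B: "B \<subseteq> ?W" "fvec.independent B" "?W \<subseteq> fvec.span B"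
    "card B = fvec.dim ?W" "finite B" using fin_basis[of ?W n] assms by blast
  have "V \<subseteq> fvec.span (insert u B)"
  proof
    fix x assume x: "x \<in> V"
    let ?y = "x - vscale (x P / u P) u"
    have "?y \<in> V" using x u assms(1) by (intro fvec.subspace_diff fvec.subspace_scale) auto
    moreover have "?y P = 0" using u by (simp add: vscale_def)
    ultimately have "?y \<in> fvec.span B" using B(3) by blast
    hence "?y \<in> fvec.span (insert u B)" by (meson fvec.span_mono subset_insertI subsetD)
    moreover have "vscale (x P / u P) u \<in> fvec.span (insert u B)"
      by (intro fvec.span_scale fvec.span_base) simp
    ultimately have "?y + vscale (x P / u P) u \<in> fvec.span (insert u B)" by (rule fvec.span_add)
    thus "x \<in> fvec.span (insert u B)" by simp
  qed
  hence "fvec.dim V \<le> card (insert u B)" using fvec.dim_le_card B(5) by blast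
  also have "\<dots> \<le> card B + 1" using B(5) by (simp add: card_insert_if)
  finally show ?thesis using B(4) by simp
qed

lemma linear_restrict: "Vector_Spaces.linear vscale vscale (\<lambda>v::nat \<Rightarrow> 'a::field. \<lambda>i. if i \<in> K then v i else 0)"
  unfolding Vector_Spaces.linear_iff by (auto simp: fvec.vector_space_axioms vscale_def fun_eq_iff)

lemma dim_proj_le:
  assumes "fvec.subspace V" "finite K" "\<And>v. v \<in> V \<Longrightarrow> (\<forall>i\<in>K. v i = 0) \<Longrightarrow> v = 0"
  shows "fvec.dim (V :: (nat \<Rightarrow> 'a::field) set) \<le> card K"
proof -
  define pr where "pr = (\<lambda>v::nat \<Rightarrow> 'a. \<lambda>i. if i \<in> K then v i else 0)"
  have lin: "Vector_Spaces.linear vscale vscale pr" unfolding pr_def by (rule linear_restrict)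
  obtain B where B: "B \<subseteq> V" "fvec.independent B" "V \<subseteq> fvec.span B" "card B = fvec.dim V"
    using fvec.basis_exists by blast
  have spB: "fvec.span B \<subseteq> V" using B(1) assms(1) by (simp add: fvec.span_minimal)
  have inj: "inj_on pr V"
  proof (rule inj_onI)
    fix x y assume xy: "x \<in> V" "y \<in> V" "pr x = pr y"
    have "x - y \<in> V" using xy(1,2) assms(1) by (simp add: fvec.subspace_diff)
    moreover have "\<forall>i\<in>K. (x - y) i = 0"
    proof
      fix i assume "i \<in> K"
      hence "pr x i = x i" "pr y i = y i" unfolding pr_def by auto
      thus "(x - y) i = 0" using xy(3) by simp
    qed
    ultimately have "x - y = 0" using assms(3) by blast
    thus "x = y" by simp
  qed
  hence "inj_on pr (fvec.span B)" using spB inj_on_subset by blast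
  hence ind: "fvec.independent (pr ` B)"
    using fvp.linear_independent_injective_image[OF lin B(2)] by blast
  have "pr ` B \<subseteq> fvec.span (uvec ` K)"
  proof (rule image_subsetI)
    fix v show "pr v \<in> fvec.span (uvec ` K)" unfolding pr_def by (rule supp_in_span[OF assms(2)]) simp
  qed
  hence "card (pr ` B) \<le> card (uvec ` K :: (nat \<Rightarrow> 'a) set)"
    using fvec.independent_span_bound[OF finite_imageI[OF assms(2)] ind] by simp
  also have "\<dots> \<le> card K" using assms(2) card_image_le by blast
  finally have "card (pr ` B) \<le> card K" .
  moreover have "card (pr ` B) = card B" by (rule card_image[OF inj_on_subset[OF inj B(1)]])
  ultimately show ?thesis using B(4) by simp
qed

lemma dim_image_inj:
  assumes lin: "Vector_Spaces.linear vscale vscale f" and inj: "inj_on f V" and sub: "fvec.subspace V"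
  shows "fvec.dim (f ` V) = fvec.dim (V :: (nat \<Rightarrow> 'a::field) set)"
proof -
  obtain B where B: "B \<subseteq> V" "fvec.independent B" "V \<subseteq> fvec.span B" "card B = fvec.dim V"
    using fvec.basis_exists by blast
  have spB: "fvec.span B \<subseteq> V" using B(1) sub by (simp add: fvec.span_minimal)
  hence "inj_on f (fvec.span B)" using inj inj_on_subset by blast
  hence ind: "fvec.independent (f ` B)"
    using fvp.linear_independent_injective_image[OF lin B(2)] by blast
  have "f ` V \<subseteq> fvec.span (f ` B)"
    using B(3) fvp.linear_span_image[OF lin, of B] by blast
  moreover have "f ` B \<subseteq> f ` V" using B(1) by blast
  ultimately have "card (f ` B) = fvec.dim (f ` V)"
    using fvec.basis_card_eq_dim[OF _ _ ind] by blast
  moreover have "card (f ` B) = card B" by (rule card_image[OF inj_on_subset[OF inj B(1)]])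
  ultimately show ?thesis using B(4) by simp
qed



definition Bf :: "nat \<Rightarrow> (nat \<Rightarrow> 'a::field) \<Rightarrow> (nat \<Rightarrow> 'a) \<Rightarrow> (nat \<Rightarrow> 'a) \<Rightarrow> 'a" where
  "Bf n \<gamma> x y = (\<Sum>i<n. \<gamma> i * x i * y i)"

definition Hf :: "nat \<Rightarrow> (nat \<Rightarrow> 'a::field) set \<Rightarrow> (nat \<Rightarrow> 'a) \<Rightarrow> (nat \<Rightarrow> 'a) set" where
  "Hf n C \<gamma> = {x \<in> C. \<forall>y\<in>C. Bf n \<gamma> x y = 0}"

lemma Bf_add: "Bf n \<gamma> (x + x') y = Bf n \<gamma> x y + Bf n \<gamma> x' y"
  unfolding Bf_def by (simp add: sum.distrib algebra_simps)

lemma Bf_scale: "Bf n \<gamma> (vscale c x) y = c * Bf n \<gamma> x y"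
  unfolding Bf_def by (simp add: sum_distrib_left vscale_def algebra_simps)

lemma Bf_diff: "Bf n \<gamma> (x - x') y = Bf n \<gamma> x y - Bf n \<gamma> x' y"
  unfolding Bf_def by (simp add: sum_subtractf algebra_simps)

lemma Bf_upd:
  assumes "P < n"
  shows "Bf n (\<gamma>(P := t)) x y = Bf n \<gamma> x y + (t - \<gamma> P) * x P * y P"
proof -
  have split: "(\<Sum>i<n. g i) = g P + (\<Sum>i\<in>{..<n}-{P}. g i)" for g :: "nat \<Rightarrow> 'a"
    using assms by (simp add: sum.remove)
  show ?thesis unfolding Bf_def
    by (subst (1 2) split) (auto simp: algebra_simps intro!: sum.cong)
qed

lemma Bf_upd0:
  assumes "x P = 0"
  shows "Bf n (\<gamma>(P := t)) x y = Bf n \<gamma> x y"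
  unfolding Bf_def using assms by (intro sum.cong) auto

lemma Bf_cong: "(\<And>i. i < n \<Longrightarrow> \<gamma> i = \<gamma>' i) \<Longrightarrow> Bf n \<gamma> x y = Bf n \<gamma>' x y"
  unfolding Bf_def by (intro sum.cong) auto

lemma Hf_cong: "(\<And>i. i < n \<Longrightarrow> \<gamma> i = \<gamma>' i) \<Longrightarrow> Hf n C \<gamma> = Hf n C \<gamma>'"
  unfolding Hf_def using Bf_cong[of n \<gamma> \<gamma>'] by simp

lemma Hf_subspace:
  assumes "fvec.subspace C"
  shows "fvec.subspace (Hf n C \<gamma>)"
  unfolding fvec.subspace_def
proof (intro conjI ballI allI)
  show "0 \<in> Hf n C \<gamma>" using assms unfolding Hf_def Bf_def by (auto simp: fvec.subspace_0)
next
  fix x x' assume "x \<in> Hf n C \<gamma>" "x' \<in> Hf n C \<gamma>"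
  thus "x + x' \<in> Hf n C \<gamma>" using assms unfolding Hf_def by (auto simp: Bf_add fvec.subspace_add)
next
  fix c x assume "x \<in> Hf n C \<gamma>"
  thus "vscale c x \<in> Hf n C \<gamma>" using assms unfolding Hf_def by (auto simp: Bf_scale fvec.subspace_scale)
qed

lemma Hf_sub: "Hf n C \<gamma> \<subseteq> C" unfolding Hf_def by auto

context
  fixes n :: nat and C :: "(nat \<Rightarrow> 'a::field) set"
  assumes subC: "fvec.subspace C" and ambC: "C \<subseteq> ambient n"
begin

lemma Hf_step: "fvec.dim (Hf n C (\<gamma>(P := t))) \<le> fvec.dim (Hf n C \<gamma>) + 1"
proof -
  let ?H' = "Hf n C (\<gamma>(P := t))"
  have "fvec.dim ?H' \<le> fvec.dim {v \<in> ?H'. v P = 0} + 1"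
    using dim_hyperplane[of "Hf n C (\<gamma>(P := t))" n P] Hf_subspace[OF subC, of n "\<gamma>(P := t)"]
      subset_trans[OF Hf_sub ambC, of n "\<gamma>(P := t)"] by linarith
  also have "fvec.dim {v \<in> ?H'. v P = 0} \<le> fvec.dim (Hf n C \<gamma>)"
  proof (rule dim_mono_amb)
    show "{v \<in> ?H'. v P = 0} \<subseteq> Hf n C \<gamma>"
    proof
      fix v assume v: "v \<in> {v \<in> ?H'. v P = 0}"
      hence "v \<in> C" "\<forall>y\<in>C. Bf n (\<gamma>(P := t)) v y = 0" "v P = 0" unfolding Hf_def by auto
      thus "v \<in> Hf n C \<gamma>" unfolding Hf_def using Bf_upd0[of v P n \<gamma> t] by auto
    qed
    show "Hf n C \<gamma> \<subseteq> ambient n" by (rule subset_trans[OF Hf_sub ambC])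
  qed
  finally show ?thesis by simp
qed

lemma Hf_two:
  assumes H0: "Hf n C \<gamma> = {0}" and P: "P < n" and t: "t1 \<noteq> t2"
  shows "Hf n C (\<gamma>(P := t1)) = {0} \<or> Hf n C (\<gamma>(P := t2)) = {0}"
proof (rule ccontr)
  assume neg: "\<not> ?thesis"
  have zin: "0 \<in> Hf n C \<gamma>'" for \<gamma>' using Hf_subspace[OF subC] fvec.subspace_0 by blast
  have "\<exists>x. x \<in> Hf n C (\<gamma>(P := t1)) \<and> x \<noteq> 0" using neg zin by blast
  then obtain x1 where x1: "x1 \<in> Hf n C (\<gamma>(P := t1))" "x1 \<noteq> 0" by blast
  have "\<exists>x. x \<in> Hf n C (\<gamma>(P := t2)) \<and> x \<noteq> 0" using neg zin by blast
  then obtain x2 where x2: "x2 \<in> Hf n C (\<gamma>(P := t2))" "x2 \<noteq> 0" by blast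
  have key: "x \<in> C \<and> Bf n \<gamma> x y = (\<gamma> P - t) * x P * y P"
    if "x \<in> Hf n C (\<gamma>(P := t))" "y \<in> C" for x y t
  proof -
    have h: "Bf n (\<gamma>(P := t)) x y = 0" "x \<in> C" using that unfolding Hf_def by auto
    have e: "Bf n (\<gamma>(P := t)) x y = Bf n \<gamma> x y + (t - \<gamma> P) * x P * y P" by (rule Bf_upd[OF P])
    have "Bf n \<gamma> x y = Bf n (\<gamma>(P := t)) x y - (t - \<gamma> P) * x P * y P" using e by simp
    also have "\<dots> = (\<gamma> P - t) * x P * y P" using h(1) by (simp add: algebra_simps)
    finally show ?thesis using h(2) by simp
  qed
  have nz: "x P \<noteq> 0 \<and> \<gamma> P \<noteq> t" if "x \<in> Hf n C (\<gamma>(P := t))" "x \<noteq> 0" for x t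
  proof (rule ccontr)
    assume "\<not> (x P \<noteq> 0 \<and> \<gamma> P \<noteq> t)"
    hence "\<forall>y\<in>C. Bf n \<gamma> x y = 0" using key[OF that(1)] by auto
    moreover have "x \<in> C" using that(1) Hf_sub by blast
    ultimately have "x \<in> Hf n C \<gamma>" unfolding Hf_def by blast
    thus False using H0 that(2) by blast
  qed
  define c1 where "c1 = inverse ((\<gamma> P - t1) * x1 P)"
  define c2 where "c2 = inverse ((\<gamma> P - t2) * x2 P)"
  have c1: "c1 * ((\<gamma> P - t1) * x1 P) = 1" unfolding c1_def by (rule left_inverse) (use nz[OF x1] in simp)
  have c2: "c2 * ((\<gamma> P - t2) * x2 P) = 1" unfolding c2_def by (rule left_inverse) (use nz[OF x2] in simp)
  define z where "z = vscale c1 x1 - vscale c2 x2"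
  have x1C: "x1 \<in> C" and x2C: "x2 \<in> C" using key x1 x2 subC fvec.subspace_0 by blast+
  have zC: "z \<in> C" unfolding z_def using x1C x2C subC
    by (intro fvec.subspace_diff fvec.subspace_scale) auto
  have "Bf n \<gamma> z y = 0" if y: "y \<in> C" for y
  proof -
    have "Bf n \<gamma> z y = c1 * Bf n \<gamma> x1 y - c2 * Bf n \<gamma> x2 y"
      unfolding z_def Bf_diff Bf_scale ..
    also have "\<dots> = (c1 * ((\<gamma> P - t1) * x1 P)) * y P - (c2 * ((\<gamma> P - t2) * x2 P)) * y P"
      using key[OF x1(1) y] key[OF x2(1) y] by (simp only: mult.assoc)
    also have "\<dots> = 0" using c1 c2 by simp
    finally show ?thesis .
  qed
  hence "z \<in> Hf n C \<gamma>" using zC unfolding Hf_def by auto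
  hence "z = 0" using H0 by blast
  hence "z P = 0" by simp
  hence eqz: "c1 * x1 P = c2 * x2 P" unfolding z_def by (simp add: vscale_def)
  have e1: "c1 * x1 P = inverse (\<gamma> P - t1)"
    unfolding c1_def using nz[OF x1] by (simp add: inverse_mult_distrib)
  have e2: "c2 * x2 P = inverse (\<gamma> P - t2)"
    unfolding c2_def using nz[OF x2] by (simp add: inverse_mult_distrib)
  have "inverse (\<gamma> P - t1) = c1 * x1 P" using e1 by simp
  also have "\<dots> = c2 * x2 P" by (rule eqz)
  also have "\<dots> = inverse (\<gamma> P - t2)" by (rule e2)
  finally have "inverse (\<gamma> P - t1) = inverse (\<gamma> P - t2)" .
  hence "\<gamma> P - t1 = \<gamma> P - t2" by (simp only: inverse_eq_iff_eq)
  hence "t1 = t2" by simp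
  thus False using t by simp
qed

lemma lcd_nonzero:
  assumes H0: "Hf n C \<gamma>0 = {0}" and three: "\<exists>a b :: 'a. a \<noteq> 0 \<and> b \<noteq> 0 \<and> a \<noteq> b"
  shows "\<exists>\<gamma>. (\<forall>i<n. \<gamma> i \<noteq> 0) \<and> Hf n C \<gamma> = {0}"
proof -
  obtain a b :: 'a where ab: "a \<noteq> 0" "b \<noteq> 0" "a \<noteq> b" using three by blast
  have "\<exists>\<gamma>. (\<forall>i<j. i < n \<longrightarrow> \<gamma> i \<noteq> 0) \<and> Hf n C \<gamma> = {0}" for j
  proof (induction j)
    case 0 show ?case using H0 by (intro exI[of _ \<gamma>0]) (simp add: zero_fun_def)
  next
    case (Suc j)
    then obtain \<gamma> where g: "\<forall>i<j. i < n \<longrightarrow> \<gamma> i \<noteq> 0" "Hf n C \<gamma> = {0}" by blast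
    show ?case
    proof (cases "j < n")
      case False thus ?thesis using g by (intro exI[of _ \<gamma>]) auto
    next
      case True
      from Hf_two[OF g(2) True ab(3)] obtain t where t: "t \<noteq> 0" "Hf n C (\<gamma>(j := t)) = {0}"
        using ab by blast
      show ?thesis
      proof (intro exI[of _ "\<gamma>(j := t)"] conjI)
        show "\<forall>i<Suc j. i < n \<longrightarrow> (\<gamma>(j := t)) i \<noteq> 0" using g(1) t(1) less_Suc_eq by auto
        show "Hf n C (\<gamma>(j := t)) = {0}" by (rule t(2))
      qed
    qed
  qed
  from this[of n] show ?thesis by blast
qed

lemma dim_zero_space: "fvec.dim ({0} :: (nat \<Rightarrow> 'a) set) = 0"
  using fvec.dim_le_card[of "{0::nat \<Rightarrow> 'a}" "{}"] by simp

lemma hull_one_exists: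
  assumes a: "\<forall>i<n. \<gamma>a i \<noteq> 0" "Hf n C \<gamma>a = {0}"
    and b: "\<forall>i<n. \<gamma>b i \<noteq> 0" "x \<in> Hf n C \<gamma>b" "x \<noteq> 0"
  shows "\<exists>\<gamma>. (\<forall>i<n. \<gamma> i \<noteq> 0) \<and> fvec.dim (Hf n C \<gamma>) = 1"
proof -
  define g where "g j = (\<lambda>i. if i < j then \<gamma>b i else \<gamma>a i)" for j
  define D where "D j = fvec.dim (Hf n C (g j))" for j
  have gnz: "\<forall>i<n. g j i \<noteq> 0" for j using a b unfolding g_def by auto
  have "g 0 = \<gamma>a" unfolding g_def by simp
  hence D0: "D 0 = 0" unfolding D_def using a(2) dim_zero_space by simp
  have "Hf n C (g n) = Hf n C \<gamma>b" by (rule Hf_cong) (simp add: g_def)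
  moreover have "Hf n C \<gamma>b \<subseteq> ambient n" by (rule subset_trans[OF Hf_sub ambC])
  ultimately have Dn: "D n \<ge> 1" unfolding D_def using dim_pos[OF b(2,3)] by simp
  have gS: "g (Suc j) = (g j)(j := \<gamma>b j)" for j unfolding g_def by (auto simp: fun_eq_iff)
  have DS: "D (Suc j) \<le> D j + 1" for j unfolding D_def gS by (rule Hf_step)
  define j0 where "j0 = (LEAST j. D j \<ge> 1)"
  have j0: "D j0 \<ge> 1" unfolding j0_def using Dn by (rule LeastI)
  have "j0 \<noteq> 0"
  proof
    assume "j0 = 0" thus False using j0 D0 by simp
  qed
  then obtain j1 where j1: "j0 = Suc j1" by (cases j0) auto
  have "j1 < (LEAST j. 1 \<le> D j)" using j1 unfolding j0_def by simp
  hence "\<not> D j1 \<ge> 1" by (rule not_less_Least)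
  hence "D j0 = 1" using DS[of j1] j0 j1 by simp
  thus ?thesis using gnz unfolding D_def by blast
qed

end



definition sc :: "(nat \<Rightarrow> 'a::field) \<Rightarrow> (nat \<Rightarrow> 'a) \<Rightarrow> (nat \<Rightarrow> 'a)" where
  "sc c x = (\<lambda>i. c i * x i)"

lemma sc_lin: "Vector_Spaces.linear vscale vscale (sc c)"
  unfolding Vector_Spaces.linear_iff by (auto simp: fvec.vector_space_axioms vscale_def sc_def fun_eq_iff algebra_simps)

lemma dual_subspace: "fvec.subspace (dual_code n C)"
  unfolding fvec.subspace_def dual_code_def ambient_def inner_prod_def
  by (auto simp: vscale_def sum.distrib algebra_simps sum_distrib_left[symmetric])

lemma dual_amb: "dual_code n C \<subseteq> ambient n" unfolding dual_code_def by auto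

context
  fixes c :: "nat \<Rightarrow> 'a::field"
  assumes cnz: "\<And>i. c i \<noteq> 0"
begin

lemma sc_inv: "sc (\<lambda>i. inverse (c i)) (sc c x) = x"
  unfolding sc_def using cnz by (simp add: fun_eq_iff)

lemma sc_inv2: "sc c (sc (\<lambda>i. inverse (c i)) x) = x"
  unfolding sc_def using cnz by (simp add: fun_eq_iff)

lemma sc_inj: "inj (sc c)"
  by (metis injI sc_inv)

lemma sc_amb: "x \<in> ambient n \<Longrightarrow> sc c x \<in> ambient n"
  unfolding ambient_def sc_def by auto

lemma sc_weight: "hweight n (sc c x) = hweight n x"
  unfolding hweight_def sc_def using cnz by simp

lemma sc_zero: "sc c x = 0 \<longleftrightarrow> x = 0"
  unfolding sc_def using cnz by (auto simp: fun_eq_iff)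

lemma sc_code_params:
  assumes "code_params C n k d"
  shows "code_params (sc c ` C) n k d"
proof -
  have lc: "C \<subseteq> ambient n" "fvec.subspace C" using assms unfolding code_params_def linear_code_def by auto
  have "linear_code n (sc c ` C)"
    unfolding linear_code_def using lc sc_amb fvp.linear_subspace_image[OF sc_lin lc(2)] by blast
  moreover have "fvec.dim (sc c ` C) = k"
    using dim_image_inj[OF sc_lin inj_on_subset[OF sc_inj subset_UNIV] lc(2)] assms
    unfolding code_params_def by simp
  moreover have "min_dist_ge n (sc c ` C) d"
    using assms unfolding code_params_def min_dist_ge_def by (auto simp: sc_weight sc_zero)
  ultimately show ?thesis unfolding code_params_def by blast
qed

lemma dual_sc:
  assumes "C \<subseteq> ambient n"
  shows "dual_code n (sc c ` C) = sc (\<lambda>i. inverse (c i)) ` dual_code n C"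
proof (intro set_eqI iffI)
  fix v assume v: "v \<in> dual_code n (sc c ` C)"
  have "sc c v \<in> dual_code n C"
    using v sc_amb[of v n] unfolding dual_code_def inner_prod_def by (auto simp: sc_def mult.assoc mult.left_commute)
  moreover have "v = sc (\<lambda>i. inverse (c i)) (sc c v)" by (simp add: sc_inv)
  ultimately show "v \<in> sc (\<lambda>i. inverse (c i)) ` dual_code n C" by blast
next
  fix v assume "v \<in> sc (\<lambda>i. inverse (c i)) ` dual_code n C"
  then obtain u where u: "u \<in> dual_code n C" "v = sc (\<lambda>i. inverse (c i)) u" by blast
  have amb: "v \<in> ambient n" using u unfolding dual_code_def ambient_def sc_def by auto
  have "inner_prod n v (sc c x) = inner_prod n u x" for x
    unfolding inner_prod_def u(2) sc_def using cnz by (intro sum.cong) (auto simp: field_simps)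
  thus "v \<in> dual_code n (sc c ` C)" using u(1) amb unfolding dual_code_def by auto
qed

lemma hull_sc:
  assumes "C \<subseteq> ambient n"
  shows "code_hull n (sc c ` C) = sc c ` Hf n C (\<lambda>i. c i * c i)"
proof (intro set_eqI iffI)
  fix u assume "u \<in> code_hull n (sc c ` C)"
  hence u: "u \<in> sc c ` C" "u \<in> dual_code n (sc c ` C)" unfolding code_hull_def by auto
  then obtain x where x: "x \<in> C" "u = sc c x" by blast
  have "Bf n (\<lambda>i. c i * c i) x y = inner_prod n u (sc c y)" for y
    unfolding Bf_def inner_prod_def x(2) sc_def by (intro sum.cong) (auto simp: algebra_simps)
  hence "x \<in> Hf n C (\<lambda>i. c i * c i)" using u(2) x(1) unfolding Hf_def dual_code_def by auto
  thus "u \<in> sc c ` Hf n C (\<lambda>i. c i * c i)" using x(2) by blast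
next
  fix u assume "u \<in> sc c ` Hf n C (\<lambda>i. c i * c i)"
  then obtain x where x: "x \<in> Hf n C (\<lambda>i. c i * c i)" "u = sc c x" by blast
  have xC: "x \<in> C" using x(1) unfolding Hf_def by auto
  have "Bf n (\<lambda>i. c i * c i) x y = inner_prod n u (sc c y)" for y
    unfolding Bf_def inner_prod_def x(2) sc_def by (intro sum.cong) (auto simp: algebra_simps)
  moreover have "u \<in> ambient n" using x(2) xC assms sc_amb by blast
  ultimately have "u \<in> dual_code n (sc c ` C)" using x(1) unfolding Hf_def dual_code_def by auto
  thus "u \<in> code_hull n (sc c ` C)" unfolding code_hull_def using xC x(2) by blast
qed

end



lemma tri_indep:
  fixes c :: "nat \<Rightarrow> nat \<Rightarrow> 'a::field"
  assumes van: "\<And>i j. i < j \<Longrightarrow> j < k \<Longrightarrow> c j (p i) = 0"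
    and nz: "\<And>j. j < k \<Longrightarrow> c j (p j) \<noteq> 0"
  shows "fvec.independent (c ` {..<k})" "card (c ` {..<k}) = k"
proof -
  have injc: "inj_on c {..<k}"
  proof (rule inj_onI)
    fix i j assume ij: "i \<in> {..<k}" "j \<in> {..<k}" "c i = c j"
    show "i = j"
    proof (rule ccontr)
      assume "i \<noteq> j"
      hence "i < j \<or> j < i" by arith
      thus False
      proof
        assume h: "i < j"
        have "c j (p i) = 0" by (rule van) (use h ij in auto)
        hence "c i (p i) = 0" using ij(3) by simp
        thus False using nz[of i] ij by simp
      next
        assume h: "j < i"
        have "c i (p j) = 0" by (rule van) (use h ij in auto)
        hence "c j (p j) = 0" using ij(3) by simp
        thus False using nz[of j] ij by simp
      qed
    qed
  qed
  thus "card (c ` {..<k}) = k" by (simp add: card_image)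
  show "fvec.independent (c ` {..<k})"
  proof (rule fvec.independent_if_scalars_zero)
    show "finite (c ` {..<k})" by simp
  next
    fix f x assume sum0: "(\<Sum>x\<in>c ` {..<k}. vscale (f x) x) = 0" and x: "x \<in> c ` {..<k}"
    have s0: "(\<Sum>j<k. vscale (f (c j)) (c j)) = 0"
      using sum0 by (simp add: sum.reindex[OF injc])
    have "\<forall>j<k. j < d \<longrightarrow> f (c j) = 0" for d
    proof (induction d)
      case (Suc d)
      show ?case
      proof (intro allI impI)
        fix j assume j: "j < k" "j < Suc d"
        show "f (c j) = 0"
        proof (cases "j < d")
          case True thus ?thesis using Suc j by blast
        next
          case False
          hence jd: "j = d" using j by simp
          have "0 = (\<Sum>i<k. vscale (f (c i)) (c i)) (p j)" using s0 by simp
          also have "\<dots> = (\<Sum>i<k. f (c i) * c i (p j))" by (simp add: sum_fun_apply vscale_def)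
          also have "\<dots> = (\<Sum>i\<in>{j}. f (c i) * c i (p j))"
          proof (rule sum.mono_neutral_right)
            show "\<forall>i\<in>{..<k} - {j}. f (c i) * c i (p j) = 0"
            proof
              fix i assume i: "i \<in> {..<k} - {j}"
              show "f (c i) * c i (p j) = 0"
              proof (cases "i < j")
                case True thus ?thesis using Suc jd j(1) i by auto
              next
                case False hence "j < i" using i by auto
                thus ?thesis using van i by auto
              qed
            qed
          qed (use j in auto)
          finally have "f (c j) * c j (p j) = 0" by simp
          thus ?thesis using nz[OF j(1)] by simp
        qed
      qed
    qed simp
    thus "f x = 0" using x by auto
  qed
qed

lemma tri_dual:
  fixes c :: "nat \<Rightarrow> nat \<Rightarrow> 'a::field"
  assumes van: "\<And>i j. i < j \<Longrightarrow> j < k \<Longrightarrow> c j (p i) = 0"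
    and nz: "\<And>j. j < k \<Longrightarrow> c j (p j) \<noteq> 0"
    and injp: "inj_on p {..<k}" and pn: "p ` {..<k} \<subseteq> {..<n}"
    and supp: "\<And>i. i \<notin> p ` {..<k} \<Longrightarrow> v i = 0"
    and orth: "\<And>j. j < k \<Longrightarrow> (\<Sum>i<n. v i * c j i) = 0"
  shows "v = 0"
proof -
  have red: "(\<Sum>i<n. v i * c j i) = (\<Sum>i<k. v (p i) * c j (p i))" for j
  proof -
    have "(\<Sum>i<n. v i * c j i) = (\<Sum>i\<in>p ` {..<k}. v i * c j i)"
      by (rule sum.mono_neutral_right) (use pn supp in auto)
    also have "\<dots> = (\<Sum>i<k. v (p i) * c j (p i))" by (simp add: sum.reindex[OF injp])
    finally show ?thesis .
  qed
  have "\<forall>j. k - d \<le> j \<longrightarrow> j < k \<longrightarrow> v (p j) = 0" for d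
  proof (induction d)
    case 0 thus ?case by auto
  next
    case (Suc d)
    show ?case
    proof (intro allI impI)
      fix j assume j: "k - Suc d \<le> j" "j < k"
      show "v (p j) = 0"
      proof (cases "k - d \<le> j")
        case True thus ?thesis using Suc j by blast
      next
        case False
        have "0 = (\<Sum>i<k. v (p i) * c j (p i))" using orth[OF j(2)] red by simp
        also have "\<dots> = (\<Sum>i\<in>{j}. v (p i) * c j (p i))"
        proof (rule sum.mono_neutral_right)
          show "\<forall>i\<in>{..<k} - {j}. v (p i) * c j (p i) = 0"
          proof
            fix i assume i: "i \<in> {..<k} - {j}"
            show "v (p i) * c j (p i) = 0"
            proof (cases "i < j")
              case True thus ?thesis using van j by auto
            next
              case False hence "j < i" using i by auto
              hence "v (p i) = 0" using Suc False i j by auto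
              thus ?thesis by simp
            qed
          qed
        qed (use j in auto)
        finally have "v (p j) * c j (p j) = 0" by simp
        thus ?thesis using nz[OF j(2)] by simp
      qed
    qed
  qed
  hence "\<forall>j<k. v (p j) = 0" by (metis diff_self_eq_0 le0 zero_diff)
  hence "\<forall>i. v i = 0" using supp by (metis imageE lessThan_iff)
  thus ?thesis by (simp add: fun_eq_iff)
qed



lemma char2_of_card:
  assumes "card (UNIV :: 'a::{finite,field} set) = 2 ^ m" "m \<ge> 1"
  shows "(1::'a) + 1 = 0"
proof -
  have pos: "CHAR('a) > 0" by (rule finite_imp_CHAR_pos) simp
  have pr: "prime CHAR('a)" using prime_CHAR_semidom[OF pos] .
  have "(\<Sum>x\<in>(UNIV::'a set). x + 1) = (\<Sum>x\<in>(UNIV::'a set). x)"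
    by (rule sum.reindex_bij_witness[of _ "\<lambda>x. x - 1" "\<lambda>x. x + 1"]) auto
  hence "of_nat (card (UNIV::'a set)) = (0::'a)"
    by (simp add: sum.distrib)
  hence "CHAR('a) dvd 2 ^ m" using of_nat_eq_0_iff_char_dvd assms(1) by metis
  hence "CHAR('a) dvd 2" using pr prime_dvd_power by blast
  hence "CHAR('a) = 2" using pr dvd_imp_le[of "CHAR('a)" 2] prime_ge_2_nat[OF pr] by simp
  hence "(of_nat 2 :: 'a) = 0" by (metis of_nat_CHAR)
  thus ?thesis by simp
qed

lemma pow_card_same:
  fixes x :: "'a::{finite,field}"
  shows "x ^ card (UNIV :: 'a set) = x"
proof (cases "x = 0")
  case False
  have "x * (\<Prod>y\<in>UNIV-{0}. x * y) = x * x ^ (card (UNIV :: 'a set) - 1) * \<Prod>(UNIV-{0})"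
    by (simp add: prod.distrib mult_ac)
  also have "x * x ^ (card (UNIV :: 'a set) - 1) = x ^ Suc (card (UNIV :: 'a set) - 1)"
    by (subst power_Suc) auto
  also have "Suc (card (UNIV :: 'a set) - 1) = card (UNIV :: 'a set)"
    using finite_UNIV_card_ge_0[where ?'a = 'a] by simp
  also have "(\<Prod>y\<in>UNIV-{0}. x * y) = (\<Prod>y\<in>UNIV-{0}. y)"
    by (rule prod.reindex_bij_witness[of _ "\<lambda>y. y / x" "\<lambda>y. x * y"]) (use False in auto)
  finally show ?thesis
    by simp
qed (use finite_UNIV_card_ge_0[where ?'a = 'a] in auto)

locale char2 =
  fixes U :: "'a::field set"
  assumes c2: "(1::'a) + 1 = 0"
begin

lemma add_self: "(x::'a) + x = 0"
proof -
  have "x + x = x * (1 + 1)" by (simp add: algebra_simps)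
  thus ?thesis using c2 by simp
qed

lemma neg_eq: "- (x::'a) = x"
  using add_self[of x] by (simp add: add_eq_0_iff2)

lemma minus_eq_plus: "(x::'a) - y = x + y"
  using neg_eq[of y] by simp

lemma sq_add: "((x::'a) + y) ^ 2 = x ^ 2 + y ^ 2"
proof -
  have "(x + y) ^ 2 = x^2 + y^2 + (x*y + x*y)" by (simp add: power2_eq_square algebra_simps)
  thus ?thesis using add_self by simp
qed

lemma pow2_add: "((x::'a) + y) ^ (2 ^ i) = x ^ (2 ^ i) + y ^ (2 ^ i)"
proof (induction i)
  case (Suc i)
  have "(x + y) ^ (2 ^ Suc i) = ((x + y) ^ (2 ^ i)) ^ 2" by (simp add: power_mult[symmetric] mult.commute)
  also have "\<dots> = (x ^ (2 ^ i)) ^ 2 + (y ^ (2 ^ i)) ^ 2" using Suc sq_add by simp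
  finally show ?case by (simp add: power_mult[symmetric] mult.commute)
qed simp

lemma poly_add_self: "(p::'a poly) + p = 0"
  by (rule poly_eqI) (simp only: coeff_add add_self coeff_0)

end

lemma trace_poly:
  fixes m :: nat
  defines "Tp \<equiv> (\<Sum>i<m. monom (1::'a::field) (2 ^ i))"
  assumes "m \<ge> 1"
  shows "Tp \<noteq> 0" "degree Tp \<le> 2 ^ (m - 1)" "poly Tp x = abs_trace m x"
proof -
  have cT: "coeff Tp n = (\<Sum>i<m. if 2 ^ i = n then 1 else 0)" for n
    unfolding Tp_def by (simp add: coeff_sum coeff_monom)
  have "coeff Tp (2 ^ (m - 1)) = 1"
  proof -
    have "(\<Sum>i<m. if 2 ^ i = (2::nat) ^ (m - 1) then (1::'a) else 0) = (\<Sum>i\<in>{m-1}. 1)"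
      by (rule sum.mono_neutral_cong_right) (use assms in auto)
    thus ?thesis using cT by simp
  qed
  thus "Tp \<noteq> 0" by auto
  show "degree Tp \<le> 2 ^ (m - 1)"
  proof (rule degree_le, intro allI impI)
    fix n :: nat assume n: "2 ^ (m - 1) < n"
    have "\<forall>i<m. (2::nat) ^ i \<noteq> n"
    proof (intro allI impI)
      fix i assume "i < m"
      hence "(2::nat) ^ i \<le> 2 ^ (m - 1)" by (intro power_increasing) auto
      thus "(2::nat) ^ i \<noteq> n" using n by auto
    qed
    thus "coeff Tp n = 0" using cT by simp
  qed
  show "poly Tp x = abs_trace m x"
    unfolding Tp_def abs_trace_def by (simp add: poly_sum poly_monom)
qed



context
  fixes m :: nat
  assumes card_q: "card (UNIV :: 'a::{finite,field} set) = 2 ^ m" and m1: "m \<ge> 1"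
begin

interpretation char2 "UNIV::'a set" using char2_of_card[OF card_q m1] by unfold_locales

lemma trace_wp: "abs_trace m ((b::'a) ^ 2 + b) = 0"
proof -
  have "abs_trace m (b ^ 2 + b) = (\<Sum>i<m. b ^ (2 ^ Suc i) - b ^ (2 ^ i))"
    unfolding abs_trace_def
  proof (intro sum.cong refl)
    fix i
    have "(b ^ 2 + b) ^ (2 ^ i) = (b ^ 2) ^ (2 ^ i) + b ^ (2 ^ i)" by (rule pow2_add)
    also have "(b ^ 2) ^ (2 ^ i) = b ^ (2 ^ Suc i)" by (simp add: power_mult[symmetric])
    finally show "(b ^ 2 + b) ^ (2 ^ i) = b ^ (2 ^ Suc i) - b ^ (2 ^ i)" by (simp add: minus_eq_plus)
  qed
  also have "\<dots> = b ^ (2 ^ m) - b ^ (2 ^ 0)" by (rule sum_lessThan_telescope)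
  also have "b ^ (2 ^ m) = b" using pow_card_same[of b] card_q by simp
  finally show ?thesis by simp
qed

lemma trace_solvable:
  assumes "abs_trace m (c::'a) = 0"
  shows "\<exists>b. b ^ 2 + b = c"
proof -
  define wp where "wp = (\<lambda>b::'a. b ^ 2 + b)"
  define K where "K = {c::'a. abs_trace m c = 0}"
  have sub: "range wp \<subseteq> K" unfolding K_def wp_def using trace_wp by auto
  obtain Tp :: "'a poly" where T: "Tp \<noteq> 0" "degree Tp \<le> 2 ^ (m - 1)" "\<And>x. poly Tp x = abs_trace m x"
    using trace_poly[OF m1] by blast
  have "K = {x. poly Tp x = 0}" unfolding K_def using T(3) by simp
  hence cK: "card K \<le> 2 ^ (m - 1)" using card_poly_roots_bound[OF T(1)] T(2) by simp
  have fib: "card {b. wp b = c'} \<le> 2" for c'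
  proof (cases "\<exists>b0. wp b0 = c'")
    case True
    then obtain b0 where b0: "wp b0 = c'" by blast
    have "{b. wp b = c'} \<subseteq> {b0, b0 + 1}"
    proof
      fix b assume "b \<in> {b. wp b = c'}"
      hence "wp b = wp b0" using b0 by simp
      hence "b ^ 2 + b = b0 ^ 2 + b0" unfolding wp_def .
      hence "(b + b0) ^ 2 + (b + b0) = (b0 ^ 2 + b0) + (b0 ^ 2 + b0)"
        by (simp add: sq_add algebra_simps)
      also have "\<dots> = 0" by (rule add_self)
      finally have "(b + b0) * (b + b0 + 1) = 0"
        by (simp add: power2_eq_square algebra_simps)
      hence "b + b0 = 0 \<or> b + b0 + 1 = 0" by simp
      moreover have "b + b0 = 0 \<Longrightarrow> b = b0"
        using neg_eq[of b0] by (simp add: add_eq_0_iff2)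
      moreover have "b = b0 + 1" if h: "b + b0 + 1 = 0"
      proof -
        have "b = - (b0 + 1)" using h add_eq_0_iff2[of b "b0 + 1"] by (simp only: add.assoc)
        thus ?thesis by (simp only: neg_eq)
      qed
      ultimately have "b = b0 \<or> b = b0 + 1" by blast
      thus "b \<in> {b0, b0 + 1}" by simp
    qed
    hence "card {b. wp b = c'} \<le> card {b0, b0 + 1}" by (rule card_mono[rotated]) simp
    also have "\<dots> \<le> 2" by (simp add: card_insert_if)
    finally show ?thesis .
  next
    case False
    thus ?thesis by simp
  qed
  have "card (UNIV :: 'a set) \<le> card (\<Union>c'\<in>range wp. {b. wp b = c'})"
    by (rule card_mono) auto
  also have "\<dots> \<le> (\<Sum>c'\<in>range wp. card {b. wp b = c'})" by (rule card_UN_le) simp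
  also have "\<dots> \<le> (\<Sum>c'\<in>range wp. 2)" by (rule sum_mono) (rule fib)
  finally have "2 ^ m \<le> 2 * card (range wp)" using card_q by simp
  hence "2 ^ (m - 1) \<le> card (range wp)"
    using m1 by (cases m) auto
  hence "card K \<le> card (range wp)" using cK by simp
  hence "range wp = K" by (intro card_seteq[OF _ sub]) simp_all
  hence "c \<in> range wp" using assms unfolding K_def by simp
  thus ?thesis unfolding wp_def by (metis (no_types, lifting) imageE)
qed

end



lemma fiber_sum: "(\<Sum>j<2*(n::nat). (f j::'b::comm_monoid_add)) = (\<Sum>l<n. f (2*l) + f (2*l+1))"
  by (induction n) (simp_all add: algebra_simps)

lemma coeff_mult_top:
  fixes p q :: "'b::idom poly"
  assumes "degree p \<le> a" "degree q \<le> b"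
  shows "coeff (p * q) (a + b) = coeff p a * coeff q b"
proof (cases "degree p = a \<and> degree q = b")
  case True thus ?thesis using coeff_mult_degree_sum[of p q] by simp
next
  case False
  hence "degree p < a \<or> degree q < b" using assms by auto
  hence "coeff p a * coeff q b = 0" by (auto simp: coeff_eq_0)
  moreover have "degree (p * q) < a + b"
    using degree_mult_le[of p q] assms \<open>degree p < a \<or> degree q < b\<close> by linarith
  ultimately show ?thesis by (simp add: coeff_eq_0)
qed

lemma roots_imp_zero:
  fixes p :: "'b::idom poly"
  assumes "finite S" "\<And>x. x \<in> S \<Longrightarrow> poly p x = 0" "degree p < card S"
  shows "p = 0"
proof (rule ccontr)
  assume nz: "p \<noteq> 0"
  have "card S \<le> card {x. poly p x = 0}" using assms(2) by (intro card_mono poly_roots_finite[OF nz]) auto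
  also have "\<dots> \<le> degree p" by (rule card_poly_roots_bound[OF nz])
  finally show False using assms(3) by simp
qed

locale curve = char2 U for U :: "'a::field set" +
  fixes \<alpha> \<beta> :: "nat \<Rightarrow> 'a" and s r :: nat
  assumes inj: "inj_on \<alpha> {..<s}" and cur: "\<And>i. i < s \<Longrightarrow> \<beta> i ^ 2 + \<beta> i = \<alpha> i ^ 5"
    and r1: "1 \<le> r" and rs: "r + 2 \<le> s"
begin

definition xa :: "nat \<Rightarrow> 'a" where "xa j = \<alpha> (j div 2)"
definition yb :: "nat \<Rightarrow> 'a" where "yb j = \<beta> (j div 2) + (if even j then 0 else 1)"
definition ev :: "'a poly \<Rightarrow> 'a poly \<Rightarrow> nat \<Rightarrow> 'a" where
  "ev A B j = poly A (xa j) + poly B (xa j) * yb j"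
definition gv :: "(nat \<Rightarrow> 'a) \<Rightarrow> 'a \<Rightarrow> 'a poly \<Rightarrow> 'a poly \<Rightarrow> nat \<Rightarrow> 'a" where
  "gv wt ex A B = (\<lambda>j. if j < 2*s then wt (j div 2) * ev A B j else if j = 2*s then ex else 0)"
definition cv :: "'a poly \<Rightarrow> 'a poly \<Rightarrow> nat \<Rightarrow> 'a" where
  "cv A B = gv (\<lambda>_. 1) (coeff B (r - 1)) A B"
definition wgt :: "nat \<Rightarrow> 'a" where
  "wgt l = inverse (\<Prod>j\<in>{..<s}-{l}. (\<alpha> l - \<alpha> j))"
definition dv :: "'a poly \<Rightarrow> 'a poly \<Rightarrow> nat \<Rightarrow> 'a" where
  "dv A B = gv wgt (coeff A (s - r)) A B"
definition okC :: "'a poly \<Rightarrow> 'a poly \<Rightarrow> bool" where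
  "okC A B \<longleftrightarrow> degree A \<le> r + 1 \<and> degree B \<le> r - 1"
definition okD :: "'a poly \<Rightarrow> 'a poly \<Rightarrow> bool" where
  "okD A B \<longleftrightarrow> degree A \<le> s - r \<and> (B = 0 \<or> degree B + r + 3 \<le> s)"
definition Cc :: "(nat \<Rightarrow> 'a) set" where "Cc = {cv A B | A B. okC A B}"
definition Dd :: "(nat \<Rightarrow> 'a) set" where "Dd = {dv A B | A B. okD A B}"

lemma wgt_nz: "l < s \<Longrightarrow> wgt l \<noteq> 0"
  unfolding wgt_def using inj by (auto simp: inj_on_def)

lemma ev_add: "ev (A1 + A2) (B1 + B2) j = ev A1 B1 j + ev A2 B2 j"
  unfolding ev_def by (simp add: algebra_simps)

lemma ev_smult: "ev (smult a A) (smult a B) j = a * ev A B j"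
  unfolding ev_def by (simp add: algebra_simps)

lemma gv_add: "gv wt (e1 + e2) (A1 + A2) (B1 + B2) = gv wt e1 A1 B1 + gv wt e2 A2 B2"
  unfolding gv_def by (auto simp: fun_eq_iff ev_add algebra_simps)

lemma gv_smult: "gv wt (a * e) (smult a A) (smult a B) = vscale a (gv wt e A B)"
  unfolding gv_def vscale_def by (auto simp: fun_eq_iff ev_smult algebra_simps)

lemma gv_amb: "gv wt e A B \<in> ambient (2*s+1)"
  unfolding gv_def ambient_def by auto

lemma gv_00: "gv wt 0 0 0 = 0"
  unfolding gv_def ev_def by (auto simp: fun_eq_iff)

lemma okC_add: "okC A1 B1 \<Longrightarrow> okC A2 B2 \<Longrightarrow> okC (A1 + A2) (B1 + B2)"
  unfolding okC_def by (meson degree_add_le)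

lemma okC_smult: "okC A B \<Longrightarrow> okC (smult a A) (smult a B)"
  unfolding okC_def by (meson degree_smult_le order_trans)

lemma okD_add: "okD A1 B1 \<Longrightarrow> okD A2 B2 \<Longrightarrow> okD (A1 + A2) (B1 + B2)"
  unfolding okD_def
proof (elim conjE, intro conjI)
  assume h: "degree A1 \<le> s - r" "degree A2 \<le> s - r"
  show "degree (A1 + A2) \<le> s - r" using h by (meson degree_add_le)
next
  assume h: "B1 = 0 \<or> degree B1 + r + 3 \<le> s" "B2 = 0 \<or> degree B2 + r + 3 \<le> s"
  show "B1 + B2 = 0 \<or> degree (B1 + B2) + r + 3 \<le> s"
  proof (cases "B1 = 0")
    case True thus ?thesis using h by simp
  next
    case False
    show ?thesis
    proof (cases "B2 = 0")
      case True thus ?thesis using h by simp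
    next
      case False
      hence "degree B1 + r + 3 \<le> s" "degree B2 + r + 3 \<le> s" using h \<open>B1 \<noteq> 0\<close> by auto
      moreover have "degree (B1 + B2) \<le> max (degree B1) (degree B2)" by (rule degree_add_le_max)
      ultimately have "degree (B1 + B2) + r + 3 \<le> s" by linarith
      thus ?thesis by blast
    qed
  qed
qed

lemma okD_smult: "okD A B \<Longrightarrow> okD (smult a A) (smult a B)"
  unfolding okD_def by (auto simp: degree_smult_eq)

lemma Cc_I: "okC A B \<Longrightarrow> cv A B \<in> Cc" unfolding Cc_def by blast
lemma Dd_I: "okD A B \<Longrightarrow> dv A B \<in> Dd" unfolding Dd_def by blast

lemma Cc_amb: "Cc \<subseteq> ambient (2*s+1)"
  unfolding Cc_def cv_def using gv_amb by auto

lemma Dd_amb: "Dd \<subseteq> ambient (2*s+1)"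
  unfolding Dd_def dv_def using gv_amb by auto

lemma Cc_subspace: "fvec.subspace Cc"
  unfolding fvec.subspace_def
proof (intro conjI ballI allI)
  have "cv 0 0 = 0" unfolding cv_def using gv_00 by simp
  moreover have "okC 0 0" unfolding okC_def by simp
  ultimately show "0 \<in> Cc" using Cc_I by metis
next
  fix x y assume "x \<in> Cc" "y \<in> Cc"
  then obtain A1 B1 A2 B2 where "x = cv A1 B1" "okC A1 B1" "y = cv A2 B2" "okC A2 B2"
    unfolding Cc_def by blast
  moreover have "cv A1 B1 + cv A2 B2 = cv (A1 + A2) (B1 + B2)"
    unfolding cv_def by (simp add: gv_add[symmetric])
  ultimately show "x + y \<in> Cc" using okC_add Cc_I by metis
next
  fix a x assume "x \<in> Cc"
  then obtain A B where "x = cv A B" "okC A B" unfolding Cc_def by blast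
  moreover have "vscale a (cv A B) = cv (smult a A) (smult a B)"
    unfolding cv_def by (simp add: gv_smult[symmetric])
  ultimately show "vscale a x \<in> Cc" using okC_smult Cc_I by metis
qed

lemma Dd_subspace: "fvec.subspace Dd"
  unfolding fvec.subspace_def
proof (intro conjI ballI allI)
  have "dv 0 0 = 0" unfolding dv_def using gv_00 by simp
  moreover have "okD 0 0" unfolding okD_def by simp
  ultimately show "0 \<in> Dd" using Dd_I by metis
next
  fix x y assume "x \<in> Dd" "y \<in> Dd"
  then obtain A1 B1 A2 B2 where "x = dv A1 B1" "okD A1 B1" "y = dv A2 B2" "okD A2 B2"
    unfolding Dd_def by blast
  moreover have "dv A1 B1 + dv A2 B2 = dv (A1 + A2) (B1 + B2)"
    unfolding dv_def by (simp add: gv_add[symmetric])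
  ultimately show "x + y \<in> Dd" using okD_add Dd_I by metis
next
  fix a x assume "x \<in> Dd"
  then obtain A B where "x = dv A B" "okD A B" unfolding Dd_def by blast
  moreover have "vscale a (dv A B) = dv (smult a A) (smult a B)"
    unfolding dv_def by (simp add: gv_smult[symmetric])
  ultimately show "vscale a x \<in> Dd" using okD_smult Dd_I by metis
qed

definition E :: "nat \<Rightarrow> 'a poly" where "E l = (\<Prod>i<l. [:-\<alpha> i, 1:])"

lemma poly_E: "poly (E l) x = (\<Prod>i<l. x - \<alpha> i)"
  unfolding E_def by (simp add: poly_prod)

lemma degree_E: "degree (E l) = l"
  unfolding E_def by (subst degree_prod_eq_sum_degree) auto

lemma E_nz: "E l \<noteq> 0"
  using degree_E unfolding E_def by auto

lemma E_zero:
  assumes "l \<le> s" "l' < s"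
  shows "poly (E l) (\<alpha> l') = 0 \<longleftrightarrow> l' < l"
proof
  assume "poly (E l) (\<alpha> l') = 0"
  then obtain i where i: "i < l" "\<alpha> l' - \<alpha> i = 0" unfolding poly_E by auto
  hence "\<alpha> l' = \<alpha> i" by simp
  hence "l' = i" using inj i(1) assms by (auto simp: inj_on_def)
  thus "l' < l" using i by simp
next
  assume "l' < l"
  thus "poly (E l) (\<alpha> l') = 0" unfolding poly_E by (intro prod_zero) auto
qed

definition fa :: "nat \<Rightarrow> nat \<Rightarrow> nat" where
  "fa F j = (if j \<le> 2*F then (j - 1) div 2 else j - F - 1)"
definition pa :: "nat \<Rightarrow> nat \<Rightarrow> nat" where
  "pa F j = (if j \<le> 2*F then j - 1 else 2*(j - F - 1))"
definition yt :: "nat \<Rightarrow> nat \<Rightarrow> bool" where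
  "yt F j \<longleftrightarrow> j \<le> 2*F \<and> even j"
definition qA :: "nat \<Rightarrow> nat \<Rightarrow> 'a poly" where
  "qA F j = (if yt F j then smult (\<beta> (fa F j)) (E (fa F j)) else E (fa F j))"
definition qB :: "nat \<Rightarrow> nat \<Rightarrow> 'a poly" where
  "qB F j = (if yt F j then E (fa F j) else 0)"

lemma ev_q: "ev (qA F j) (qB F j) c = poly (E (fa F j)) (xa c) * (if yt F j then \<beta> (fa F j) + yb c else 1)"
  unfolding ev_def qA_def qB_def by (auto simp: algebra_simps)

lemma pa_div: "1 \<le> j \<Longrightarrow> pa F j div 2 = fa F j"
  unfolding pa_def fa_def by auto

lemma pa_yt: "1 \<le> j \<Longrightarrow> yt F j \<Longrightarrow> pa F j = 2 * fa F j + 1"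
  unfolding pa_def fa_def yt_def by (auto; presburger)

lemma pa_nyt: "1 \<le> j \<Longrightarrow> j \<le> 2*F \<Longrightarrow> \<not> yt F j \<Longrightarrow> pa F j = 2 * fa F j"
  unfolding pa_def fa_def yt_def by (auto; presburger)

lemma pa_big: "2*F < j \<Longrightarrow> pa F j = 2 * fa F j"
  unfolding pa_def fa_def by auto

lemma fa_mono1:
  assumes "1 \<le> i" "i < j"
  shows "fa F i \<le> fa F j"
  unfolding fa_def using assms by (auto simp: div_le_mono)

lemma fa_mono2:
  assumes "1 \<le> i" "i < j" "fa F i = fa F j"
  shows "yt F j \<and> i = j - 1"
proof (cases "j \<le> 2*F")
  case True
  hence iF: "i \<le> 2*F" using assms by simp
  hence "(i - 1) div 2 = (j - 1) div 2" using assms(3) True unfolding fa_def by simp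
  thus ?thesis using assms(1,2) True unfolding yt_def by presburger
next
  case False
  show ?thesis
  proof (cases "i \<le> 2*F")
    case True
    hence "(i - 1) div 2 = j - F - 1" using assms(3) False unfolding fa_def by simp
    hence False using True \<open>\<not> j \<le> 2*F\<close> assms(1) by presburger
    thus ?thesis ..
  next
    case False
    hence "i - F - 1 = j - F - 1" using assms(3) \<open>\<not> j \<le> 2*F\<close> unfolding fa_def by simp
    hence False using False \<open>\<not> j \<le> 2*F\<close> assms(2) by simp
    thus ?thesis ..
  qed
qed

lemmas fa_mono = fa_mono1 fa_mono2

lemma tri_van:
  assumes j: "1 \<le> j" "fa F j < s" and i: "1 \<le> i" "i < j"
  shows "ev (qA F j) (qB F j) (pa F i) = 0"
proof -
  have xi: "xa (pa F i) = \<alpha> (fa F i)" unfolding xa_def using pa_div[OF i(1)] by simp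
  have fi: "fa F i < s" using fa_mono1[OF i, of F] j(2) by simp
  show ?thesis
  proof (cases "fa F i < fa F j")
    case True
    hence "poly (E (fa F j)) (xa (pa F i)) = 0" unfolding xi using E_zero[of "fa F j" "fa F i"] j(2) fi by simp
    thus ?thesis unfolding ev_q by simp
  next
    case False
    hence eq: "fa F i = fa F j" using fa_mono1[OF i, of F] by simp
    from fa_mono2[OF i eq] have yj: "yt F j" and ij: "i = j - 1" by auto
    have "\<not> yt F i" using yj ij j(1) unfolding yt_def by auto
    moreover have "i \<le> 2 * F" using yj ij unfolding yt_def by auto
    ultimately have "pa F i = 2 * fa F i" using pa_nyt[OF i(1)] by simp
    hence "yb (pa F i) = \<beta> (fa F j)" unfolding yb_def using eq by simp
    thus ?thesis unfolding ev_q using yj add_self by simp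
  qed
qed

lemma tri_nz:
  assumes j: "1 \<le> j" "fa F j < s"
  shows "ev (qA F j) (qB F j) (pa F j) \<noteq> 0"
proof -
  have xj: "xa (pa F j) = \<alpha> (fa F j)" unfolding xa_def using pa_div[OF j(1)] by simp
  have "poly (E (fa F j)) (xa (pa F j)) \<noteq> 0" unfolding xj using E_zero[of "fa F j" "fa F j"] j(2) by simp
  moreover have "yt F j \<Longrightarrow> \<beta> (fa F j) + yb (pa F j) = 1"
    using pa_yt[OF j(1)] unfolding yb_def by (simp add: add_self flip: add.assoc)
  ultimately show ?thesis unfolding ev_q by auto
qed

lemma pa_inj: "inj_on (pa F) {1..}"
proof (rule inj_onI)
  fix i j assume "i \<in> {1..}" "j \<in> {1..}" "pa F i = pa F j"
  thus "i = j" unfolding pa_def by (cases "i \<le> 2*F"; cases "j \<le> 2*F") auto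
qed

lemma pa_lt: "1 \<le> j \<Longrightarrow> fa F j < s \<Longrightarrow> pa F j < 2*s"
  unfolding pa_def fa_def by (auto split: if_splits)

lemma degree_qB: "qB F j \<noteq> 0 \<Longrightarrow> degree (qB F j) = fa F j \<and> yt F j"
  unfolding qB_def using degree_E by (auto split: if_splits)

lemma degree_qA: "degree (qA F j) \<le> fa F j"
  unfolding qA_def using degree_E degree_smult_le by (auto split: if_splits intro: order_trans)

lemma fa_yt: "yt F j \<Longrightarrow> 1 \<le> j \<Longrightarrow> fa F j + 1 \<le> F"
  unfolding yt_def fa_def by (auto; presburger)

lemma fa_le: "1 \<le> j \<Longrightarrow> fa F j \<le> j - F - 1 + F"
  unfolding fa_def by auto

lemma cv_aff: "c < 2*s \<Longrightarrow> cv A B c = ev A B c"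
  unfolding cv_def gv_def by simp
lemma cv_ext: "cv A B (2*s) = coeff B (r - 1)"
  unfolding cv_def gv_def by simp
lemma dv_aff: "c < 2*s \<Longrightarrow> dv A B c = wgt (c div 2) * ev A B c"
  unfolding dv_def gv_def by simp
lemma dv_ext: "dv A B (2*s) = coeff A (s - r)"
  unfolding dv_def gv_def by simp

definition kC :: nat where "kC = 2*r + 2"
definition ck :: "nat \<Rightarrow> nat \<Rightarrow> 'a" where
  "ck j = (if j = 0 then cv 0 (monom 1 (r - 1)) else cv (qA (r - 1) j) (qB (r - 1) j))"
definition pk :: "nat \<Rightarrow> nat" where
  "pk j = (if j = 0 then 2*s else pa (r - 1) j)"

lemma fa_C: "1 \<le> j \<Longrightarrow> j < kC \<Longrightarrow> fa (r - 1) j \<le> r + 1"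
  unfolding fa_def kC_def using r1 by auto

lemma fa_C_s: "1 \<le> j \<Longrightarrow> j < kC \<Longrightarrow> fa (r - 1) j < s"
  using fa_C rs by fastforce

lemma ck_mem: "j < kC \<Longrightarrow> ck j \<in> Cc"
proof (cases "j = 0")
  case True
  have "okC 0 (monom 1 (r - 1))" unfolding okC_def by (simp add: degree_monom_eq)
  thus ?thesis using True Cc_I unfolding ck_def by simp
next
  case False
  assume j: "j < kC"
  have "degree (qA (r - 1) j) \<le> r + 1" using degree_qA fa_C[of j] j False by (meson le_trans less_one not_less)
  moreover have "degree (qB (r - 1) j) \<le> r - 1"
  proof (cases "qB (r - 1) j = 0")
    case False
    hence "degree (qB (r - 1) j) = fa (r - 1) j" "yt (r - 1) j" using degree_qB by auto
    moreover have "fa (r - 1) j + 1 \<le> r - 1" using fa_yt[of "r - 1" j] calculation(2) \<open>j \<noteq> 0\<close> by simp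
    ultimately show ?thesis by simp
  qed simp
  ultimately have "okC (qA (r - 1) j) (qB (r - 1) j)" unfolding okC_def by simp
  thus ?thesis using False Cc_I unfolding ck_def by simp
qed

lemma ck_van:
  assumes "i < j" "j < kC"
  shows "ck j (pk i) = 0"
proof -
  have j1: "1 \<le> j" and js: "fa (r - 1) j < s" using assms fa_C_s[of j] by auto
  show ?thesis
  proof (cases "i = 0")
    case True
    have "coeff (qB (r - 1) j) (r - 1) = 0"
    proof (cases "qB (r - 1) j = 0")
      case False
      hence "degree (qB (r - 1) j) = fa (r - 1) j" "yt (r - 1) j" using degree_qB by auto
      moreover have "fa (r - 1) j + 1 \<le> r - 1" using fa_yt[of "r - 1" j] calculation(2) j1 by simp
      ultimately show ?thesis by (intro coeff_eq_0) simp
    qed simp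
    thus ?thesis using True j1 unfolding ck_def pk_def by (simp add: cv_ext)
  next
    case False
    hence i1: "1 \<le> i" by simp
    have "fa (r - 1) i < s" using fa_mono1[OF i1 assms(1), of "r - 1"] js by simp
    hence "pa (r - 1) i < 2*s" using pa_lt[OF i1] by simp
    thus ?thesis using False j1 tri_van[OF j1 js i1 assms(1)] unfolding ck_def pk_def by (simp add: cv_aff)
  qed
qed

lemma ck_nz:
  assumes "j < kC"
  shows "ck j (pk j) \<noteq> 0"
proof (cases "j = 0")
  case True thus ?thesis unfolding ck_def pk_def by (simp add: cv_ext)
next
  case False
  hence j1: "1 \<le> j" by simp
  have js: "fa (r - 1) j < s" using fa_C_s[OF j1 assms] .
  thus ?thesis using False pa_lt[OF j1 js] tri_nz[OF j1 js] unfolding ck_def pk_def by (simp add: cv_aff)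
qed

lemma pk_inj: "inj_on pk {..<kC}"
proof (rule inj_onI)
  fix i j assume ij: "i \<in> {..<kC}" "j \<in> {..<kC}" "pk i = pk j"
  show "i = j"
  proof (cases "i = 0"; cases "j = 0")
    assume "i = 0" "j \<noteq> 0"
    hence "pa (r - 1) j < 2*s" using pa_lt fa_C_s ij by simp
    thus ?thesis using ij \<open>i = 0\<close> \<open>j \<noteq> 0\<close> unfolding pk_def by simp
  next
    assume "i \<noteq> 0" "j = 0"
    hence "pa (r - 1) i < 2*s" using pa_lt fa_C_s ij by simp
    thus ?thesis using ij \<open>i \<noteq> 0\<close> \<open>j = 0\<close> unfolding pk_def by simp
  next
    assume "i \<noteq> 0" "j \<noteq> 0"
    thus ?thesis using ij pa_inj[of "r - 1"] unfolding pk_def inj_on_def by simp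
  qed simp
qed

lemma pk_lt: "j < kC \<Longrightarrow> pk j < 2*s + 1"
  unfolding pk_def using pa_lt fa_C_s by (cases "j = 0") (auto simp: less_Suc_eq)

definition kD :: nat where "kD = 2*s - 2*r - 1"
definition dk :: "nat \<Rightarrow> nat \<Rightarrow> 'a" where
  "dk j = (if j = 0 then dv (monom 1 (s - r)) 0 else dv (qA (s - r - 2) j) (qB (s - r - 2) j))"
definition pd :: "nat \<Rightarrow> nat" where
  "pd j = (if j = 0 then 2*s else pa (s - r - 2) j)"

lemma fa_D: "1 \<le> j \<Longrightarrow> j < kD \<Longrightarrow> fa (s - r - 2) j \<le> s - r - 1"
  unfolding fa_def kD_def using rs by auto

lemma fa_D_s: "1 \<le> j \<Longrightarrow> j < kD \<Longrightarrow> fa (s - r - 2) j < s"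
  using fa_D rs r1 by fastforce

lemma dk_mem: "j < kD \<Longrightarrow> dk j \<in> Dd"
proof (cases "j = 0")
  case True
  have "okD (monom 1 (s - r)) 0" unfolding okD_def by (simp add: degree_monom_eq)
  thus ?thesis using True Dd_I unfolding dk_def by simp
next
  case False
  assume j: "j < kD"
  have "degree (qA (s - r - 2) j) \<le> s - r" using degree_qA fa_D[of j] j False by (meson le_trans less_one not_less diff_le_self)
  moreover have "qB (s - r - 2) j = 0 \<or> degree (qB (s - r - 2) j) + r + 3 \<le> s"
  proof (cases "qB (s - r - 2) j = 0")
    case False
    hence "degree (qB (s - r - 2) j) = fa (s - r - 2) j" "yt (s - r - 2) j" using degree_qB by auto
    moreover have "fa (s - r - 2) j + 1 \<le> s - r - 2" using fa_yt[of "s - r - 2" j] calculation(2) \<open>j \<noteq> 0\<close> by simp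
    ultimately show ?thesis using rs by (intro disjI2) linarith
  qed simp
  ultimately have "okD (qA (s - r - 2) j) (qB (s - r - 2) j)" unfolding okD_def by simp
  thus ?thesis using False Dd_I unfolding dk_def by simp
qed

lemma dk_van:
  assumes "i < j" "j < kD"
  shows "dk j (pd i) = 0"
proof -
  have j1: "1 \<le> j" and js: "fa (s - r - 2) j < s" using assms fa_D_s[of j] by auto
  show ?thesis
  proof (cases "i = 0")
    case True
    have "degree (qA (s - r - 2) j) < s - r"
      using degree_qA[of "s - r - 2" j] fa_D[OF j1 assms(2)] rs by linarith
    hence "coeff (qA (s - r - 2) j) (s - r) = 0" by (intro coeff_eq_0) simp
    thus ?thesis using True j1 unfolding dk_def pd_def by (simp add: dv_ext)
  next
    case False
    hence i1: "1 \<le> i" by simp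
    have "fa (s - r - 2) i < s" using fa_mono1[OF i1 assms(1), of "s - r - 2"] js by simp
    hence "pa (s - r - 2) i < 2*s" using pa_lt[OF i1] by simp
    thus ?thesis using False j1 tri_van[OF j1 js i1 assms(1)] unfolding dk_def pd_def by (simp add: dv_aff)
  qed
qed

lemma dk_nz:
  assumes "j < kD"
  shows "dk j (pd j) \<noteq> 0"
proof (cases "j = 0")
  case True thus ?thesis unfolding dk_def pd_def by (simp add: dv_ext)
next
  case False
  hence j1: "1 \<le> j" by simp
  have js: "fa (s - r - 2) j < s" using fa_D_s[OF j1 assms] .
  have "wgt (pa (s - r - 2) j div 2) \<noteq> 0" using pa_div[OF j1] js wgt_nz by simp
  thus ?thesis using False pa_lt[OF j1 js] tri_nz[OF j1 js] unfolding dk_def pd_def by (simp add: dv_aff)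
qed

lemma pd_inj: "inj_on pd {..<kD}"
proof (rule inj_onI)
  fix i j assume ij: "i \<in> {..<kD}" "j \<in> {..<kD}" "pd i = pd j"
  show "i = j"
  proof (cases "i = 0"; cases "j = 0")
    assume "i = 0" "j \<noteq> 0"
    hence "pa (s - r - 2) j < 2*s" using pa_lt fa_D_s ij by simp
    thus ?thesis using ij \<open>i = 0\<close> \<open>j \<noteq> 0\<close> unfolding pd_def by simp
  next
    assume "i \<noteq> 0" "j = 0"
    hence "pa (s - r - 2) i < 2*s" using pa_lt fa_D_s ij by simp
    thus ?thesis using ij \<open>i \<noteq> 0\<close> \<open>j = 0\<close> unfolding pd_def by simp
  next
    assume "i \<noteq> 0" "j \<noteq> 0"
    thus ?thesis using ij pa_inj[of "s - r - 2"] unfolding pd_def inj_on_def by simp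
  qed simp
qed

lemma pd_lt: "j < kD \<Longrightarrow> pd j < 2*s + 1"
  unfolding pd_def using pa_lt fa_D_s by (cases "j = 0") (auto simp: less_Suc_eq)

lemma two0: "(2::'a) = 0"
  using c2 by simp

lemma lagrange:
  assumes dp: "degree p < s"
  shows "(\<Sum>l<s. wgt l * poly p (\<alpha> l)) = coeff p (s - 1)"
proof -
  define Lb where "Lb l = (\<Prod>j\<in>{..<s}-{l}. [:-\<alpha> j, 1:])" for l
  define L where "L = (\<Sum>l<s. smult (wgt l * poly p (\<alpha> l)) (Lb l))"
  have pLb: "poly (Lb l) x = (\<Prod>j\<in>{..<s}-{l}. x - \<alpha> j)" for l x
    unfolding Lb_def by (simp add: poly_prod)
  have dLb: "degree (Lb l) = s - 1" if "l < s" for l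
  proof -
    have "degree (Lb l) = (\<Sum>j\<in>{..<s}-{l}. degree [:-\<alpha> j, 1:])"
      unfolding Lb_def by (rule degree_prod_eq_sum_degree) auto
    also have "\<dots> = card ({..<s}-{l})" by simp
    also have "\<dots> = s - 1" using that by simp
    finally show ?thesis .
  qed
  have lLb: "lead_coeff (Lb l) = 1" for l
    unfolding Lb_def by (simp add: lead_coeff_prod)
  have cLb: "coeff (Lb l) (s - 1) = 1" if "l < s" for l using lLb[of l] dLb[OF that] by simp
  have evalL: "poly L (\<alpha> k) = poly p (\<alpha> k)" if k: "k < s" for k
  proof -
    have "poly L (\<alpha> k) = (\<Sum>l<s. wgt l * poly p (\<alpha> l) * poly (Lb l) (\<alpha> k))"
      unfolding L_def by (simp add: poly_sum)
    also have "\<dots> = (\<Sum>l\<in>{k}. wgt l * poly p (\<alpha> l) * poly (Lb l) (\<alpha> k))"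
    proof (rule sum.mono_neutral_right)
      show "\<forall>l\<in>{..<s} - {k}. wgt l * poly p (\<alpha> l) * poly (Lb l) (\<alpha> k) = 0"
      proof
        fix l assume l: "l \<in> {..<s} - {k}"
        have "k \<in> {..<s} - {l}" using l k by auto
        hence "poly (Lb l) (\<alpha> k) = 0" unfolding pLb by (intro prod_zero) auto
        thus "wgt l * poly p (\<alpha> l) * poly (Lb l) (\<alpha> k) = 0" by simp
      qed
    qed (use k in auto)
    also have "\<dots> = poly p (\<alpha> k) * (wgt k * poly (Lb k) (\<alpha> k))" by (simp add: algebra_simps)
    also have "wgt k * poly (Lb k) (\<alpha> k) = 1"
    proof -
      have "(\<Prod>j\<in>{..<s}-{k}. \<alpha> k - \<alpha> j) \<noteq> 0" using inj k by (auto simp: inj_on_def)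
      thus ?thesis unfolding wgt_def pLb by simp
    qed
    finally show ?thesis by simp
  qed
  have dL: "degree L \<le> s - 1"
    unfolding L_def
    by (rule degree_sum_le) (use dLb degree_smult_le in \<open>auto intro: order_trans\<close>)
  have "p - L = 0"
  proof (rule ccontr)
    assume nz: "p - L \<noteq> 0"
    have "\<alpha> ` {..<s} \<subseteq> {x. poly (p - L) x = 0}" using evalL by auto
    hence "card (\<alpha> ` {..<s}) \<le> card {x. poly (p - L) x = 0}"
      by (intro card_mono poly_roots_finite[OF nz])
    also have "\<dots> \<le> degree (p - L)" by (rule card_poly_roots_bound[OF nz])
    also have "\<dots> \<le> max (degree p) (degree L)" by (rule degree_diff_le_max)
    also have "\<dots> < s" using dp dL assms by auto
    finally show False using card_image[OF inj] by simp
  qed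
  hence pL: "p = L" by simp
  have "coeff L (s - 1) = (\<Sum>l<s. wgt l * poly p (\<alpha> l) * coeff (Lb l) (s - 1))"
    unfolding L_def by (simp add: coeff_sum)
  hence "coeff p (s - 1) = (\<Sum>l<s. wgt l * poly p (\<alpha> l) * coeff (Lb l) (s - 1))"
    using pL by simp
  also have "\<dots> = (\<Sum>l<s. wgt l * poly p (\<alpha> l))" using cLb by simp
  finally show ?thesis by simp
qed

lemma xa_even: "l < s \<Longrightarrow> xa (2*l) = \<alpha> l" unfolding xa_def by simp
lemma xa_odd: "xa (2*l+1) = \<alpha> l" unfolding xa_def by simp
lemma yb_even: "yb (2*l) = \<beta> l" unfolding yb_def by simp
lemma yb_odd: "yb (2*l+1) = \<beta> l + 1" unfolding yb_def by simp

lemma fiber_prod: "ev A' B' (2*l) * ev A B (2*l) + ev A' B' (2*l+1) * ev A B (2*l+1)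
   = poly (A' * B + A * B' + B' * B) (\<alpha> l)"
proof -
  let ?a' = "poly A' (\<alpha> l)" and ?b' = "poly B' (\<alpha> l)" and ?a = "poly A (\<alpha> l)"
    and ?b = "poly B (\<alpha> l)" and ?u = "\<beta> l"
  have "ev A' B' (2*l) * ev A B (2*l) + ev A' B' (2*l+1) * ev A B (2*l+1)
      = (?a' + ?b' * ?u) * (?a + ?b * ?u) + (?a' + ?b' * (?u + 1)) * (?a + ?b * (?u + 1))"
    unfolding ev_def xa_def yb_def by simp
  also have "\<dots> = 2 * ((?a' + ?b' * ?u) * (?a + ?b * ?u) + ?b' * ?b * ?u) + (?a' * ?b + ?a * ?b' + ?b' * ?b)"
    by (simp add: algebra_simps)
  also have "\<dots> = ?a' * ?b + ?a * ?b' + ?b' * ?b" using two0 by simp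
  finally show ?thesis by simp
qed

lemma fiber_lin: "ev A B (2*l) + ev A B (2*l+1) = poly B (\<alpha> l)"
proof -
  have "ev A B (2*l) + ev A B (2*l+1) = 2 * (poly A (\<alpha> l) + poly B (\<alpha> l) * \<beta> l) + poly B (\<alpha> l)"
    unfolding ev_def xa_def yb_def by (simp add: algebra_simps)
  thus ?thesis using two0 by simp
qed

lemma pair_DC:
  assumes D: "okD A' B'" and C: "okC A B"
  shows "inner_prod (2*s+1) (dv A' B') (cv A B) = 0"
proof -
  define P where "P = A' * B + A * B' + B' * B"
  have dAB: "degree (A' * B) \<le> s - 1" using D C degree_mult_le[of A' B] r1 rs unfolding okD_def okC_def by linarith
  have dAB': "degree (A * B') \<le> s - 2"
  proof (cases "B' = 0")
    case False thus ?thesis using D C degree_mult_le[of A B'] unfolding okD_def okC_def by linarith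
  qed simp
  have dBB: "degree (B' * B) \<le> s - 2"
  proof (cases "B' = 0")
    case False thus ?thesis using D C degree_mult_le[of B' B] r1 unfolding okD_def okC_def by linarith
  qed simp
  have "degree P \<le> s - 1" unfolding P_def
    by (intro degree_add_le) (use dAB dAB' dBB in auto)
  hence dP: "degree P < s" using rs by linarith
  have "coeff (A' * B) (s - 1) = coeff A' (s - r) * coeff B (r - 1)"
  proof -
    have "s - 1 = (s - r) + (r - 1)" using r1 rs by simp
    thus ?thesis using coeff_mult_top[of A' "s - r" B "r - 1"] D C unfolding okD_def okC_def by simp
  qed
  moreover have "coeff (A * B') (s - 1) = 0" using dAB' rs by (intro coeff_eq_0) linarith
  moreover have "coeff (B' * B) (s - 1) = 0" using dBB rs by (intro coeff_eq_0) linarith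
  ultimately have cP: "coeff P (s - 1) = coeff A' (s - r) * coeff B (r - 1)" unfolding P_def by simp
  have "inner_prod (2*s+1) (dv A' B') (cv A B) = (\<Sum>i<2*s. dv A' B' i * cv A B i) + dv A' B' (2*s) * cv A B (2*s)"
    unfolding inner_prod_def by simp
  also have "(\<Sum>i<2*s. dv A' B' i * cv A B i) = (\<Sum>i<2*s. wgt (i div 2) * (ev A' B' i * ev A B i))"
    by (intro sum.cong) (auto simp: dv_aff cv_aff)
  also have "\<dots> = (\<Sum>l<s. wgt l * poly P (\<alpha> l))"
    unfolding fiber_sum
  proof (intro sum.cong refl)
    fix l
    have "wgt ((2*l) div 2) * (ev A' B' (2*l) * ev A B (2*l)) + wgt ((2*l+1) div 2) * (ev A' B' (2*l+1) * ev A B (2*l+1))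
        = wgt l * (ev A' B' (2*l) * ev A B (2*l) + ev A' B' (2*l+1) * ev A B (2*l+1))"
      by (simp add: distrib_left)
    thus "wgt ((2*l) div 2) * (ev A' B' (2*l) * ev A B (2*l)) + wgt ((2*l+1) div 2) * (ev A' B' (2*l+1) * ev A B (2*l+1))
        = wgt l * poly P (\<alpha> l)" unfolding P_def fiber_prod .
  qed
  also have "\<dots> = coeff P (s - 1)" by (rule lagrange[OF dP])
  also have "dv A' B' (2*s) * cv A B (2*s) = coeff A' (s - r) * coeff B (r - 1)" by (simp add: dv_ext cv_ext)
  finally show ?thesis using cP two0 by simp
qed

definition \<gamma>1 :: "nat \<Rightarrow> 'a" where "\<gamma>1 j = (if j < 2*s then wgt (j div 2) else 1)"

lemma \<gamma>1_nz: "j < 2*s+1 \<Longrightarrow> \<gamma>1 j \<noteq> 0"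
  unfolding \<gamma>1_def using wgt_nz by auto

lemma one_mem: "cv 1 0 \<in> Cc" using Cc_I[of 1 0] unfolding okC_def by simp

lemma one_nz: "cv 1 0 \<noteq> 0"
proof
  assume "cv 1 0 = 0"
  hence "cv 1 0 0 = 0" by simp
  moreover have "cv 1 0 0 = 1" using rs by (simp add: cv_aff ev_def)
  ultimately show False by simp
qed

lemma pair_one:
  assumes C: "okC A B"
  shows "Bf (2*s+1) \<gamma>1 (cv 1 0) (cv A B) = 0"
proof -
  have "Bf (2*s+1) \<gamma>1 (cv 1 0) (cv A B) = (\<Sum>i<2*s. \<gamma>1 i * cv 1 0 i * cv A B i) + \<gamma>1 (2*s) * cv 1 0 (2*s) * cv A B (2*s)"
    unfolding Bf_def by simp
  also have "\<gamma>1 (2*s) * cv 1 0 (2*s) * cv A B (2*s) = 0" by (simp add: cv_ext)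
  also have "(\<Sum>i<2*s. \<gamma>1 i * cv 1 0 i * cv A B i) = (\<Sum>i<2*s. wgt (i div 2) * ev A B i)"
    by (intro sum.cong) (auto simp: \<gamma>1_def cv_aff ev_def)
  also have "\<dots> = (\<Sum>l<s. wgt l * poly B (\<alpha> l))"
    unfolding fiber_sum
  proof (intro sum.cong refl)
    fix l
    have "wgt ((2*l) div 2) * ev A B (2*l) + wgt ((2*l+1) div 2) * ev A B (2*l+1)
        = wgt l * (ev A B (2*l) + ev A B (2*l+1))"
      by (simp add: distrib_left)
    thus "wgt ((2*l) div 2) * ev A B (2*l) + wgt ((2*l+1) div 2) * ev A B (2*l+1)
        = wgt l * poly B (\<alpha> l)" unfolding fiber_lin .
  qed
  also have "\<dots> = coeff B (s - 1)" using C r1 rs unfolding okC_def by (intro lagrange) linarith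
  also have "\<dots> = 0" using C r1 rs unfolding okC_def by (intro coeff_eq_0) linarith
  finally show ?thesis by simp
qed

lemma fiber_norm:
  assumes "l < s"
  shows "ev A B (2*l) * ev A B (2*l+1) = poly (A * A + A * B + B * B * monom 1 5) (\<alpha> l)"
proof -
  let ?a = "poly A (\<alpha> l)" and ?b = "poly B (\<alpha> l)" and ?u = "\<beta> l"
  have "ev A B (2*l) * ev A B (2*l+1) = (?a + ?b * ?u) * (?a + ?b * (?u + 1))"
    unfolding ev_def xa_def yb_def by simp
  also have "\<dots> = ?a * ?a + ?a * ?b + ?b * ?b * (?u ^ 2 + ?u) + 2 * (?a * ?b * ?u)"
    by (simp add: algebra_simps power2_eq_square)
  also have "?u ^ 2 + ?u = \<alpha> l ^ 5" using cur[OF assms] .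
  finally show ?thesis using two0 by (simp add: poly_monom)
qed

lemma norm_poly:
  fixes A B :: "'a poly"
  assumes nz: "A \<noteq> 0 \<or> B \<noteq> 0" and dA: "2 * degree A \<le> M" and dB: "B \<noteq> 0 \<Longrightarrow> 2 * degree B + 5 \<le> M"
  shows "A * A + A * B + B * B * monom 1 5 \<noteq> 0" "degree (A * A + A * B + B * B * monom 1 5) \<le> M"
proof -
  let ?N = "A * A + A * B + B * B * monom 1 5"
  have "?N \<noteq> 0 \<and> degree ?N \<le> M"
  proof (cases "B = 0")
    case True
    hence e: "?N = A * A" by simp
    have An: "A \<noteq> 0" using nz True by simp
    have "degree (A * A) = 2 * degree A" using degree_mult_eq[OF An An] by simp
    moreover have "A * A \<noteq> 0" using An by simp
    ultimately show ?thesis unfolding e using dA by simp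
  next
    case False
    have "B * B \<noteq> 0" using False by simp
    hence d3: "degree (B * B * monom 1 5) = 2 * degree B + 5"
      using degree_mult_eq[OF \<open>B * B \<noteq> 0\<close>, of "monom 1 5"] degree_mult_eq[OF False False]
      by (simp add: degree_monom_eq)
    have n3: "B * B * monom 1 5 \<noteq> 0" using False by simp
    show ?thesis
    proof (cases "A = 0")
      case True thus ?thesis using d3 n3 dB[OF False] by simp
    next
      case Anz: False
      have d1: "degree (A * A) = 2 * degree A" using degree_mult_eq[OF Anz Anz] by simp
      have d2: "degree (A * B) = degree A + degree B" using degree_mult_eq[OF Anz False] by simp
      show ?thesis
      proof (cases "2 * degree B + 5 < 2 * degree A")
        case True
        have "degree (A * B + B * B * monom 1 5) < degree (A * A)"
          using d1 d2 d3 True by (intro degree_add_less) linarith+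
        hence "degree (A * A + (A * B + B * B * monom 1 5)) = degree (A * A)" by (rule degree_add_eq_left)
        hence dN: "degree ?N = 2 * degree A" using d1 by (simp add: add.assoc)
        have "?N \<noteq> 0"
        proof
          assume "?N = 0" hence "degree ?N = 0" by simp
          thus False using dN True by simp
        qed
        thus ?thesis using dA dN by simp
      next
        case False
        hence "2 * degree A < 2 * degree B + 5" by presburger
        hence "degree (A * A + A * B) < degree (B * B * monom 1 5)"
          using d1 d2 d3 by (intro degree_add_less) linarith+
        hence "degree ?N = degree (B * B * monom 1 5)" by (rule degree_add_eq_right)
        hence dN: "degree ?N = 2 * degree B + 5" using d3 by simp
        have "?N \<noteq> 0"
        proof
          assume "?N = 0" hence "degree ?N = 0" by simp
          thus False using dN by simp
        qed
        thus ?thesis using dN dB[OF \<open>B \<noteq> 0\<close>] by simp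
      qed
    qed
  qed
  thus "?N \<noteq> 0" "degree ?N \<le> M" by auto
qed

lemma zero_count:
  fixes A B :: "'a poly"
  assumes nz: "A \<noteq> 0 \<or> B \<noteq> 0" and dA: "2 * degree A \<le> M" and dB: "B \<noteq> 0 \<Longrightarrow> 2 * degree B + 5 \<le> M"
  shows "card {j. j < 2*s \<and> ev A B j = 0} \<le> M"
proof -
  define N where "N = A * A + A * B + B * B * monom 1 5"
  have Nnz: "N \<noteq> 0" and dN: "degree N \<le> M" using norm_poly[OF nz dA dB] unfolding N_def by auto
  define Z where "Z l = {j \<in> {2*l, 2*l+1}. ev A B j = 0}" for l
  have cover: "{j. j < 2*s \<and> ev A B j = 0} \<subseteq> (\<Union>l<s. Z l)"
  proof
    fix j assume j: "j \<in> {j. j < 2*s \<and> ev A B j = 0}"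
    have "j = 2 * (j div 2) \<or> j = 2 * (j div 2) + 1" by presburger
    moreover have "j div 2 < s" using j by auto
    ultimately show "j \<in> (\<Union>l<s. Z l)" using j unfolding Z_def by auto
  qed
  have Zl: "card (Z l) \<le> order (\<alpha> l) N" if l: "l < s" for l
  proof -
    have fin: "finite (Z l)" unfolding Z_def by simp
    have c2': "card (Z l) \<le> 2"
    proof -
      have "card (Z l) \<le> card {2*l, 2*l+1}" unfolding Z_def by (rule card_mono) auto
      thus ?thesis by simp
    qed
    show ?thesis
    proof (cases "Z l = {}")
      case True thus ?thesis by simp
    next
      case False
      then obtain j where j: "j \<in> Z l" by blast
      hence "ev A B (2*l) = 0 \<or> ev A B (2*l+1) = 0" unfolding Z_def by auto
      hence prod0: "ev A B (2*l) * ev A B (2*l+1) = 0" by auto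
      have "poly N (\<alpha> l) = ev A B (2*l) * ev A B (2*l+1)" unfolding N_def by (rule fiber_norm[OF l, symmetric])
      hence root: "poly N (\<alpha> l) = 0" using prod0 by simp
      hence o1: "order (\<alpha> l) N \<ge> 1" using Nnz order_root by (metis less_one not_less)
      show ?thesis
      proof (cases "card (Z l) = 2")
        case False thus ?thesis using o1 c2' by linarith
      next
        case True
        have "Z l = {2*l, 2*l+1}"
          using True card_subset_eq[of "{2*l, 2*l+1}" "Z l"] unfolding Z_def by auto
        hence e0: "ev A B (2*l) = 0" and e1: "ev A B (2*l+1) = 0" unfolding Z_def by auto
        have pB: "poly B (\<alpha> l) = 0" using fiber_lin[of A B l] e0 e1 by simp
        have pA: "poly A (\<alpha> l) = 0" using e0 pB unfolding ev_def xa_def by simp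
        have qA: "[:-\<alpha> l, 1:] dvd A" using pA by (simp add: poly_eq_0_iff_dvd)
        have qB: "[:-\<alpha> l, 1:] dvd B" using pB by (simp add: poly_eq_0_iff_dvd)
        have "[:-\<alpha> l, 1:] ^ 2 dvd N" unfolding N_def power2_eq_square
          using qA qB by (intro dvd_add mult_dvd_mono dvd_mult2) auto
        hence "2 \<le> order (\<alpha> l) N" using Nnz by (simp add: order_divides)
        thus ?thesis using True by simp
      qed
    qed
  qed
  have "card {j. j < 2*s \<and> ev A B j = 0} \<le> card (\<Union>l<s. Z l)"
    by (rule card_mono[OF _ cover]) (simp add: Z_def)
  also have "\<dots> \<le> (\<Sum>l<s. card (Z l))" by (rule card_UN_le) simp
  also have "\<dots> \<le> (\<Sum>l<s. order (\<alpha> l) N)" by (rule sum_mono) (rule Zl, simp)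
  also have "\<dots> = (\<Sum>x\<in>\<alpha> ` {..<s}. order x N)" by (simp add: sum.reindex[OF inj])
  also have "\<dots> = (\<Sum>x\<in>\<alpha> ` {..<s} \<inter> {x. poly N x = 0}. order x N)"
    by (rule sum.mono_neutral_right) (use Nnz order_gt_0_iff in auto)
  also have "\<dots> \<le> (\<Sum>x | poly N x = 0. order x N)"
    by (rule sum_mono2[OF poly_roots_finite[OF Nnz]]) auto
  also have "\<dots> \<le> degree N" by (rule sum_order_le_degree[OF Nnz])
  finally show ?thesis using dN by simp
qed

lemma hw_gv:
  assumes "\<And>l. l < s \<Longrightarrow> wt l \<noteq> 0"
  shows "hweight (2*s+1) (gv wt e A B) = (2*s - card {j. j < 2*s \<and> ev A B j = 0}) + (if e = 0 then 0 else 1)"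
proof -
  have wnz: "wt (j div 2) \<noteq> 0" if "j < 2*s" for j using assms that by auto
  have "{i. i < 2*s+1 \<and> gv wt e A B i \<noteq> 0} = {j. j < 2*s \<and> ev A B j \<noteq> 0} \<union> (if e = 0 then {} else {2*s})"
    unfolding gv_def using wnz by (auto simp: less_Suc_eq)
  moreover have "card ({j. j < 2*s \<and> ev A B j \<noteq> 0} \<union> (if e = 0 then {} else {2*s}))
      = card {j. j < 2*s \<and> ev A B j \<noteq> 0} + (if e = 0 then 0 else 1)"
    by (auto simp: card_insert_if)
  moreover have "card {j. j < 2*s \<and> ev A B j \<noteq> 0} = 2*s - card {j. j < 2*s \<and> ev A B j = 0}"
  proof -
    have "{j. j < 2*s \<and> ev A B j \<noteq> 0} = {..<2*s} - {j. j < 2*s \<and> ev A B j = 0}" by auto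
    moreover have "{j. j < 2*s \<and> ev A B j = 0} \<subseteq> {..<2*s}" by auto
    ultimately show ?thesis by (simp add: card_Diff_subset)
  qed
  ultimately show ?thesis unfolding hweight_def by simp
qed

lemma cv_00: "cv 0 0 = 0" unfolding cv_def using gv_00 by simp
lemma dv_00: "dv 0 0 = 0" unfolding dv_def using gv_00 by simp

lemma weight_C:
  assumes C: "okC A B" and nz: "cv A B \<noteq> 0"
  shows "hweight (2*s+1) (cv A B) \<ge> 2*(s - r - 1)"
proof -
  have AB: "A \<noteq> 0 \<or> B \<noteq> 0" using nz cv_00 by auto
  have hw: "hweight (2*s+1) (cv A B) = (2*s - card {j. j < 2*s \<and> ev A B j = 0}) + (if coeff B (r - 1) = 0 then 0 else 1)"
    unfolding cv_def by (rule hw_gv) simp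
  show ?thesis
  proof (cases "coeff B (r - 1) = 0")
    case False
    have "card {j. j < 2*s \<and> ev A B j = 0} \<le> 2*r+3"
      by (rule zero_count[OF AB]) (use C r1 in \<open>auto simp: okC_def\<close>)
    thus ?thesis using hw False rs by simp
  next
    case True
    have dB: "B \<noteq> 0 \<Longrightarrow> 2 * degree B + 5 \<le> 2*r+2"
    proof -
      assume "B \<noteq> 0"
      hence "degree B \<noteq> r - 1" using True by (metis leading_coeff_0_iff)
      thus ?thesis using C r1 unfolding okC_def by linarith
    qed
    have "card {j. j < 2*s \<and> ev A B j = 0} \<le> 2*r+2"
      by (rule zero_count[OF AB _ dB]) (use C in \<open>auto simp: okC_def\<close>)
    thus ?thesis using hw True rs by simp
  qed
qed

lemma weight_D:
  assumes D: "okD A B" and nz: "dv A B \<noteq> 0"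
  shows "hweight (2*s+1) (dv A B) \<ge> 2*r+1"
proof -
  have AB: "A \<noteq> 0 \<or> B \<noteq> 0" using nz dv_00 by auto
  have hw: "hweight (2*s+1) (dv A B) = (2*s - card {j. j < 2*s \<and> ev A B j = 0}) + (if coeff A (s - r) = 0 then 0 else 1)"
    unfolding dv_def by (rule hw_gv) (rule wgt_nz)
  show ?thesis
  proof (cases "coeff A (s - r) = 0")
    case False
    have "card {j. j < 2*s \<and> ev A B j = 0} \<le> 2*(s - r)"
      by (rule zero_count[OF AB]) (use D rs in \<open>auto simp: okD_def\<close>)
    thus ?thesis using hw False rs by simp
  next
    case True
    have dA: "2 * degree A \<le> 2*s - 2*r - 1"
    proof (cases "A = 0")
      case False
      hence "degree A \<noteq> s - r" using True by (metis leading_coeff_0_iff)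
      thus ?thesis using D rs unfolding okD_def by linarith
    qed (use rs in simp)
    have "card {j. j < 2*s \<and> ev A B j = 0} \<le> 2*s - 2*r - 1"
      by (rule zero_count[OF AB dA]) (use D rs in \<open>auto simp: okD_def\<close>)
    thus ?thesis using hw True rs by simp
  qed
qed

lemma Cc_inj_J:
  assumes v: "v \<in> Cc" and van: "\<And>i. i \<in> pk ` {..<kC} \<Longrightarrow> v i = 0"
  shows "v = 0"
proof -
  obtain A B where vAB: "v = cv A B" and C: "okC A B" using v unfolding Cc_def by blast
  have cJ: "c \<in> pk ` {..<kC}" if "c < 2*(r - 1)" for c
  proof -
    have "pk (c + 1) = c" unfolding pk_def pa_def using that by simp
    moreover have "c + 1 < kC" using that unfolding kC_def by simp
    ultimately show ?thesis by (metis imageI lessThan_iff)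
  qed
  have eJ: "2*l \<in> pk ` {..<kC}" if "l \<le> r + 1" for l
  proof (cases "l + 2 \<le> r")
    case True
    hence "2*l < 2*(r - 1)" by simp
    thus ?thesis using cJ by simp
  next
    case False
    have "pk (l + r) = 2*l" unfolding pk_def pa_def using False r1 by auto
    moreover have "l + r < kC" using that unfolding kC_def by simp
    ultimately show ?thesis by (metis imageI lessThan_iff)
  qed
  have "pk 0 = 2*s" unfolding pk_def by simp
  moreover have "0 \<in> {..<kC}" unfolding kC_def by simp
  ultimately have sJ: "2*s \<in> pk ` {..<kC}" by (metis imageI)
  have cB: "coeff B (r - 1) = 0" using van[OF sJ] vAB by (simp add: cv_ext)
  have B0: "B = 0"
  proof (rule ccontr)
    assume Bnz: "B \<noteq> 0"
    have "degree B \<noteq> r - 1" using cB Bnz by (metis leading_coeff_0_iff)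
    hence dB: "degree B < r - 1" using C unfolding okC_def by linarith
    have "B = 0"
    proof (rule roots_imp_zero[of "\<alpha> ` {..<r - 1}"])
      fix x assume "x \<in> \<alpha> ` {..<r - 1}"
      then obtain l where l: "l < r - 1" "x = \<alpha> l" by blast
      have "2*l < 2*(r - 1)" "2*l+1 < 2*(r - 1)" using l by auto
      hence "v (2*l) = 0" "v (2*l+1) = 0" using cJ van by auto
      moreover have "2*l+1 < 2*s" using l rs by simp
      ultimately have "ev A B (2*l) = 0" "ev A B (2*l+1) = 0" using vAB by (auto simp: cv_aff)
      thus "poly B x = 0" using fiber_lin[of A B l] l(2) by simp
    next
      have "inj_on \<alpha> {..<r - 1}" by (rule inj_on_subset[OF inj]) (use rs in auto)
      thus "degree B < card (\<alpha> ` {..<r - 1})" using dB by (simp add: card_image)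
    qed simp
    thus False using Bnz by simp
  qed
  have A0: "A = 0"
  proof (rule roots_imp_zero[of "\<alpha> ` {..r + 1}"])
    fix x assume "x \<in> \<alpha> ` {..r + 1}"
    then obtain l where l: "l \<le> r + 1" "x = \<alpha> l" by blast
    have "v (2*l) = 0" using eJ[OF l(1)] van by simp
    moreover have "2*l < 2*s" using l rs by simp
    ultimately have "ev A B (2*l) = 0" using vAB by (simp add: cv_aff)
    thus "poly A x = 0" using B0 l(2) unfolding ev_def xa_def by simp
  next
    have "inj_on \<alpha> {..r + 1}" by (rule inj_on_subset[OF inj]) (use rs in auto)
    thus "degree A < card (\<alpha> ` {..r + 1})" using C unfolding okC_def by (simp add: card_image)
  qed simp
  show ?thesis using vAB A0 B0 cv_00 by simp
qed

lemma ck_sub: "ck ` {..<kC} \<subseteq> Cc" using ck_mem by auto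

lemma ck_indep: "fvec.independent (ck ` {..<kC})"
  by (rule tri_indep(1)[where c=ck and p=pk and k=kC, OF ck_van ck_nz])
lemma ck_card: "card (ck ` {..<kC}) = kC"
  by (rule tri_indep(2)[where c=ck and p=pk and k=kC, OF ck_van ck_nz])
lemma dk_indep: "fvec.independent (dk ` {..<kD})"
  by (rule tri_indep(1)[where c=dk and p=pd and k=kD, OF dk_van dk_nz])
lemma dk_card: "card (dk ` {..<kD}) = kD"
  by (rule tri_indep(2)[where c=dk and p=pd and k=kD, OF dk_van dk_nz])
lemma dk_sub: "dk ` {..<kD} \<subseteq> Dd" using dk_mem by auto

lemma dim_Cc: "fvec.dim Cc = kC"
proof (rule antisym)
  have "fvec.dim Cc \<le> card (pk ` {..<kC})"
    by (rule dim_proj_le[OF Cc_subspace]) (use Cc_inj_J in auto)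
  also have "\<dots> \<le> kC" using card_image_le[of "{..<kC}" pk] by simp
  finally show "fvec.dim Cc \<le> kC" .
next
  have "card (ck ` {..<kC}) \<le> fvec.dim Cc"
    using indep_le_dim(2)[OF ck_indep ck_sub Cc_amb] .
  thus "kC \<le> fvec.dim Cc" using ck_card by simp
qed

abbreviation "Dual \<equiv> dual_code (2*s+1) Cc"

lemma Dd_sub_Dual: "Dd \<subseteq> Dual"
proof
  fix v assume "v \<in> Dd"
  then obtain A' B' where v: "v = dv A' B'" "okD A' B'" unfolding Dd_def by blast
  have "inner_prod (2*s+1) v c = 0" if "c \<in> Cc" for c
    using that pair_DC[OF v(2)] v(1) unfolding Cc_def by auto
  moreover have "v \<in> ambient (2*s+1)" using v gv_amb unfolding dv_def by simp
  ultimately show "v \<in> Dual" unfolding dual_code_def by auto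
qed

lemma kCD: "kC + kD = 2*s + 1" unfolding kC_def kD_def using rs by simp

lemma dim_Dual_le: "fvec.dim Dual \<le> kD"
proof -
  let ?K = "{..<2*s+1} - pk ` {..<kC}"
  have "fvec.dim Dual \<le> card ?K"
  proof (rule dim_proj_le[OF dual_subspace])
    show "finite ?K" by simp
    fix v assume v: "v \<in> Dual" and vK: "\<forall>i\<in>?K. v i = 0"
    show "v = 0"
    proof (rule tri_dual[where c=ck and p=pk and k=kC, OF ck_van ck_nz pk_inj])
      show "pk ` {..<kC} \<subseteq> {..<2*s+1}" using pk_lt by auto
      fix i assume "i \<notin> pk ` {..<kC}"
      thus "v i = 0" using vK v unfolding dual_code_def ambient_def by (cases "i < 2*s+1") auto
    next
      fix j assume "j < kC"
      hence "ck j \<in> Cc" by (rule ck_mem)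
      thus "(\<Sum>i<2*s+1. v i * ck j i) = 0" using v unfolding dual_code_def inner_prod_def by auto
    qed
  qed
  also have "card ?K = (2*s+1) - kC"
  proof -
    have "pk ` {..<kC} \<subseteq> {..<2*s+1}" using pk_lt by auto
    moreover have "card (pk ` {..<kC}) = kC" using card_image[OF pk_inj] by simp
    ultimately show ?thesis by (simp add: card_Diff_subset)
  qed
  finally show ?thesis using kCD by simp
qed

lemma Dual_dim: "fvec.dim Dual = kD"
proof (rule antisym[OF dim_Dual_le])
  have "card (dk ` {..<kD}) \<le> fvec.dim Dual"
    using indep_le_dim(2)[OF dk_indep subset_trans[OF dk_sub Dd_sub_Dual] dual_amb] .
  thus "kD \<le> fvec.dim Dual" using dk_card by simp
qed

lemma Dual_sub_Dd: "Dual \<subseteq> Dd"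
proof
  fix v assume v: "v \<in> Dual"
  let ?S = "dk ` {..<kD}"
  have ind: "fvec.independent ?S" by (rule dk_indep)
  have cS: "card ?S = kD" by (rule dk_card)
  have "v \<in> fvec.span ?S"
  proof (rule ccontr)
    assume nv: "v \<notin> fvec.span ?S"
    have vS: "v \<notin> ?S"
    proof
      assume "v \<in> ?S" hence "v \<in> fvec.span ?S" by (rule fvec.span_base)
      thus False using nv by simp
    qed
    have i2: "fvec.independent (insert v ?S)" by (rule fvec.independent_insertI[OF nv ind])
    have s2: "insert v ?S \<subseteq> Dual" using v subset_trans[OF dk_sub Dd_sub_Dual] by simp
    have "card (insert v ?S) \<le> fvec.dim Dual" by (rule indep_le_dim(2)[OF i2 s2 dual_amb])
    moreover have "card (insert v ?S) = kD + 1" using vS cS by simp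
    ultimately show False using Dual_dim by simp
  qed
  moreover have "fvec.span ?S \<subseteq> Dd" by (rule fvec.span_minimal[OF dk_sub Dd_subspace])
  ultimately show "v \<in> Dd" by blast
qed

lemma params_C: "code_params Cc (2*s+1) (2*(r+1)) (2*(s-r-1))"
  unfolding code_params_def linear_code_def min_dist_ge_def
proof (intro conjI ballI impI)
  show "Cc \<subseteq> ambient (2*s+1)" by (rule Cc_amb)
  show "fvec.subspace Cc" by (rule Cc_subspace)
  show "fvec.dim Cc = 2*(r+1)" using dim_Cc unfolding kC_def by simp
  fix c assume "c \<in> Cc" "c \<noteq> 0"
  thus "2*(s-r-1) \<le> hweight (2*s+1) c" using weight_C unfolding Cc_def by blast
qed

lemma params_D: "code_params Dual (2*s+1) (2*(s-r)-1) (2*r+1)"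
  unfolding code_params_def linear_code_def min_dist_ge_def
proof (intro conjI ballI impI)
  show "Dual \<subseteq> ambient (2*s+1)" by (rule dual_amb)
  show "fvec.subspace Dual" by (rule dual_subspace)
  show "fvec.dim Dual = 2*(s-r)-1" using Dual_dim unfolding kD_def by simp
  fix c assume "c \<in> Dual" "c \<noteq> 0"
  thus "2*r+1 \<le> hweight (2*s+1) c" using weight_D Dual_sub_Dd unfolding Dd_def by blast
qed

definition \<gamma>0 :: "nat \<Rightarrow> 'a" where "\<gamma>0 i = (if i \<in> pk ` {..<kC} then 1 else 0)"

lemma H_\<gamma>0: "Hf (2*s+1) Cc \<gamma>0 = {0}"
proof (intro set_eqI iffI)
  fix x assume x: "x \<in> Hf (2*s+1) Cc \<gamma>0"
  hence xC: "x \<in> Cc" and xB: "\<forall>y\<in>Cc. Bf (2*s+1) \<gamma>0 x y = 0" unfolding Hf_def by auto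
  define v where "v i = (if i \<in> pk ` {..<kC} then x i else 0)" for i
  have "v = 0"
  proof (rule tri_dual[where c=ck and p=pk and k=kC, OF ck_van ck_nz pk_inj])
    show "pk ` {..<kC} \<subseteq> {..<2*s+1}" using pk_lt by auto
    fix i assume "i \<notin> pk ` {..<kC}" thus "v i = 0" unfolding v_def by simp
  next
    fix j assume "j < kC"
    hence "Bf (2*s+1) \<gamma>0 x (ck j) = 0" using xB ck_mem by blast
    moreover have "Bf (2*s+1) \<gamma>0 x (ck j) = (\<Sum>i<2*s+1. v i * ck j i)"
      unfolding Bf_def v_def \<gamma>0_def by (intro sum.cong) auto
    ultimately show "(\<Sum>i<2*s+1. v i * ck j i) = 0" by simp
  qed
  hence v0: "\<And>i. v i = 0" by simp
  have "\<And>i. i \<in> pk ` {..<kC} \<Longrightarrow> x i = 0"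
  proof -
    fix i assume "i \<in> pk ` {..<kC}"
    thus "x i = 0" using v0[of i] unfolding v_def by simp
  qed
  hence "x = 0" using Cc_inj_J[OF xC] by blast
  thus "x \<in> {0}" by simp
next
  fix x :: "nat \<Rightarrow> 'a" assume "x \<in> {0}"
  thus "x \<in> Hf (2*s+1) Cc \<gamma>0"
    using Hf_subspace[OF Cc_subspace, of "2*s+1" \<gamma>0] fvec.subspace_0 by auto
qed

lemma H_\<gamma>1: "cv 1 0 \<in> Hf (2*s+1) Cc \<gamma>1"
  unfolding Hf_def using one_mem pair_one unfolding Cc_def by blast

theorem curve_main:
  assumes sq: "\<And>y::'a. \<exists>x. x * x = y" and three: "\<exists>a b::'a. a \<noteq> 0 \<and> b \<noteq> 0 \<and> a \<noteq> b"
  shows "\<exists>C :: (nat \<Rightarrow> 'a) set.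
           code_params C (2*s+1) (2*(r+1)) (2*(s-r-1))
         \<and> fvec.dim (code_hull (2*s+1) C) = 1
         \<and> code_params (dual_code (2*s+1) C) (2*s+1) (2*(s-r)-1) (2*r+1)"
proof -
  obtain \<gamma>a where ga: "\<forall>i<2*s+1. \<gamma>a i \<noteq> 0" "Hf (2*s+1) Cc \<gamma>a = {0}"
    using lcd_nonzero[OF Cc_subspace Cc_amb H_\<gamma>0 three] by blast
  obtain \<gamma> where g: "\<forall>i<2*s+1. \<gamma> i \<noteq> 0" "fvec.dim (Hf (2*s+1) Cc \<gamma>) = 1"
    using hull_one_exists[OF Cc_subspace Cc_amb ga _ H_\<gamma>1 one_nz] \<gamma>1_nz by blast
  define c where "c i = (if i < 2*s+1 then (SOME x. x * x = \<gamma> i) else 1)" for i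
  have cc: "c i * c i = \<gamma> i" if "i < 2*s+1" for i
    using someI_ex[OF sq[of "\<gamma> i"]] that unfolding c_def by simp
  have cnz: "c i \<noteq> 0" for i
  proof (cases "i < 2*s+1")
    case True thus ?thesis using cc[OF True] g(1) by (metis mult_zero_left)
  qed (simp add: c_def)
  have cinz: "inverse (c i) \<noteq> 0" for i using cnz by simp
  let ?C = "sc c ` Cc"
  have P1: "code_params ?C (2*s+1) (2*(r+1)) (2*(s-r-1))" by (rule sc_code_params[OF cnz params_C])
  have "dual_code (2*s+1) ?C = sc (\<lambda>i. inverse (c i)) ` Dual" by (rule dual_sc[OF cnz Cc_amb])
  hence P2: "code_params (dual_code (2*s+1) ?C) (2*s+1) (2*(s-r)-1) (2*r+1)"
    using sc_code_params[OF cinz params_D] by simp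
  have "code_hull (2*s+1) ?C = sc c ` Hf (2*s+1) Cc (\<lambda>i. c i * c i)" by (rule hull_sc[OF cnz Cc_amb])
  also have "Hf (2*s+1) Cc (\<lambda>i. c i * c i) = Hf (2*s+1) Cc \<gamma>" by (rule Hf_cong) (simp add: cc)
  finally have "fvec.dim (code_hull (2*s+1) ?C) = fvec.dim (Hf (2*s+1) Cc \<gamma>)"
    using dim_image_inj[OF sc_lin inj_on_subset[OF sc_inj[OF cnz] subset_UNIV] Hf_subspace[OF Cc_subspace]] by simp
  hence "fvec.dim (code_hull (2*s+1) ?C) = 1" using g(2) by simp
  thus ?thesis using P1 P2 by blast
qed

end



theorem mainTheorem13:
  fixes m s r :: nat
  assumes "card (UNIV :: 'a::{finite,field} set) = 2 ^ m"
    and "m \<ge> 3"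
    and "1 \<le> s" and "s \<le> card {\<alpha>::'a. abs_trace m (\<alpha> ^ 5) = 0}"
    and "1 \<le> r" and "r + 2 \<le> s"
  shows "\<exists>C :: (nat \<Rightarrow> 'a) set.
           code_params C (2*s+1) (2*(r+1)) (2*(s-r-1))
         \<and> fvec.dim (code_hull (2*s+1) C) = 1
         \<and> code_params (dual_code (2*s+1) C) (2*s+1) (2*(s-r)-1) (2*r+1)"
proof -
  have m1: "m \<ge> 1" using assms(2) by simp
  have c2: "(1::'a) + 1 = 0" by (rule char2_of_card[OF assms(1) m1])
  interpret ch: char2 "UNIV :: 'a set" by unfold_locales (rule c2)
  define U0 where "U0 = {\<alpha>::'a. abs_trace m (\<alpha> ^ 5) = 0}"
  have "card {..<s} \<le> card U0" using assms(4) unfolding U0_def by simp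
  then obtain \<alpha> :: "nat \<Rightarrow> 'a" where \<alpha>: "\<alpha> ` {..<s} \<subseteq> U0" "inj_on \<alpha> {..<s}"
    using card_le_inj[of "{..<s}" U0] by auto
  define \<beta> where "\<beta> i = (SOME b. b ^ 2 + b = \<alpha> i ^ 5)" for i
  have cur: "\<beta> i ^ 2 + \<beta> i = \<alpha> i ^ 5" if "i < s" for i
  proof -
    have "abs_trace m (\<alpha> i ^ 5) = 0" using \<alpha>(1) that unfolding U0_def by auto
    hence "\<exists>b. b ^ 2 + b = \<alpha> i ^ 5" by (rule trace_solvable[OF assms(1) m1])
    thus ?thesis unfolding \<beta>_def by (rule someI_ex)
  qed
  have injsq: "inj (\<lambda>x::'a. x * x)"
  proof (rule injI)
    fix x y :: 'a assume h: "x * x = y * y"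
    have "(x + y) * (x + y) = x * x + y * y + (x * y + x * y)" by (simp add: algebra_simps)
    also have "x * y + x * y = 0" by (rule ch.add_self)
    also have "y * y = x * x" using h by simp
    also have "x * x + x * x = 0" by (rule ch.add_self)
    finally have "(x + y) * (x + y) = 0" by simp
    hence "x + y = 0" by simp
    hence "x = - y" by (simp add: eq_neg_iff_add_eq_0)
    thus "x = y" using ch.neg_eq by simp
  qed
  have sq: "\<And>y::'a. \<exists>x. x * x = y"
  proof -
    fix y :: 'a
    have "surj (\<lambda>x::'a. x * x)" by (rule finite_UNIV_inj_surj[OF _ injsq]) simp
    hence "y \<in> range (\<lambda>x::'a. x * x)" by simp
    thus "\<exists>x. x * x = y" by (metis imageE)
  qed
  have three: "\<exists>a b::'a. a \<noteq> 0 \<and> b \<noteq> 0 \<and> a \<noteq> b"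
  proof -
    have "(2::nat) ^ 3 \<le> 2 ^ m" using assms(2) by (intro power_increasing) auto
    hence "card (UNIV :: 'a set) > card {0::'a, 1}" using assms(1) by (simp add: card_insert_if)
    hence "UNIV \<noteq> {0::'a, 1}" by (metis less_irrefl)
    then obtain b :: 'a where "b \<notin> {0, 1}" by blast
    thus ?thesis by (intro exI[of _ 1] exI[of _ b]) auto
  qed
  interpret cu: curve "UNIV :: 'a set" \<alpha> \<beta> s r
    by unfold_locales (use \<alpha>(2) cur assms(5,6) in auto)
  show ?thesis by (rule cu.curve_main[OF sq three])
qed


end
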